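(* There is a universal constant $C>0$ such that the following holds for all sufficiently large $n$. Let $p\in(0,1)$, let $A$ be an $n\times n$ random matrix with i.i.d. Bernoulli$(p)$ entries, let $m_0\le m_1\le n/2$ be positive integers, $a>0$, and let $x\in\mathbb R^n$ satisfy $x^*_{m_1}=3a$ and $x^*_{m_1}>3x^*_{n-m_1}$. Put $q=2m_0p(1-p)^{2m_0-1}$. Then $$\mathbb{P}\Big\{\|Ax\|<\sqrt{\tfrac{1}{50}qn}\,a\Big\}\le\exp\Big(-\tfrac1{40}qn\Big).$$ Moreover, if $\frac{m_1}{m_0}q>C$, then $$\mathbb{P}\Big\{\|Ax\|<\sqrt{\tfrac n4}\,a\Big\}\le2\exp\Big(-\tfrac1{12}\log\big(\lfloor m_1/m_0\rfloor q\big)\,n\Big).$$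
   Context: For $x\in\mathbb R^n$, $x^*$ is the non-increasing rearrangement of $(|x_1|,\dots,|x_n|)$. $\|\cdot\|$ is the Euclidean norm. Bernoulli$(p)$ entries equal $1$ w.p. $p$ and $0$ otherwise. *)

theory Defs
  imports "HOL-Analysis.Analysis" "HOL-Probability.Probability"
begin

definition bernoulli_matrix :: "nat \<Rightarrow> real \<Rightarrow> (nat \<times> nat \<Rightarrow> bool) pmf" where
  "bernoulli_matrix n p = Pi_pmf ({..<n} \<times> {..<n}) False (\<lambda>_. bernoulli_pmf p)"

definition mat_vec :: "nat \<Rightarrow> (nat \<times> nat \<Rightarrow> bool) \<Rightarrow> (nat \<Rightarrow> real) \<Rightarrow> nat \<Rightarrow> real" where
  "mat_vec n A x i = (\<Sum>j<n. (if A (i, j) then 1 else 0) * x j)"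

definition euclid_norm :: "nat \<Rightarrow> (nat \<Rightarrow> real) \<Rightarrow> real" where
  "euclid_norm n y = sqrt (\<Sum>i<n. (y i)\<^sup>2)"

(* non-increasing rearrangement: x^*_k (1 \<le> k \<le> n) is the k-th largest of |x_0|,...,|x_{n-1}| *)
definition rearr :: "nat \<Rightarrow> (nat \<Rightarrow> real) \<Rightarrow> nat \<Rightarrow> real" where
  "rearr n x k = rev (sort (map (\<lambda>i. \<bar>x i\<bar>) [0..<n])) ! (k - 1)"

end

theory Submission
  imports Defs
begin

lemma lym_aux:
  assumes "finite A" "F \<subseteq> Pow A" "\<forall>X\<in>F. \<forall>Y\<in>F. \<not> X \<subset> Y"
  shows "(\<Sum>X\<in>F. fact (card X) * fact (card A - card X)) \<le> (fact (card A) :: nat)"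
  using assms
proof (induction "card A" arbitrary: A F)
  case 0
  then have "A = {}" by auto
  with 0 have "F \<subseteq> {{}}" by auto
  then show ?case by (cases "F = {}") (auto simp: \<open>A = {}\<close> dest: subset_singletonD)
next
  case (Suc n)
  have finF: "finite F" using Suc.prems by (meson finite_Pow_iff rev_finite_subset)
  show ?case
  proof (cases "{} \<in> F")
    case True
    then have "F = {{}}" using Suc.prems(3) by blast
    then show ?thesis by simp
  next
    case False
    have fX: "finite X" if "X \<in> F" for X using that Suc.prems by (meson PowD finite_subset subsetD)
    have step: "(fact (card X) * fact (card A - card X) :: nat) =
        (\<Sum>t\<in>X. fact (card (X - {t})) * fact (card (A - {t}) - card (X - {t})))" if X: "X \<in> F" for X
    proof -
      have ne: "X \<noteq> {}" using X False by auto
      have XA: "X \<subseteq> A" using X Suc.prems by auto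
      have cX: "card X \<ge> 1" using ne fX[OF X] by (simp add: Suc_leI card_gt_0_iff)
      have "(\<Sum>t\<in>X. fact (card (X - {t})) * fact (card (A - {t}) - card (X - {t})))
          = (\<Sum>t\<in>X. fact (card X - 1) * fact (card A - card X) :: nat)"
        apply (rule sum.cong[OF refl])
        using XA fX[OF X] Suc.prems(1) cX by (auto simp: card_Diff_singleton subsetD)
      also have "\<dots> = card X * (fact (card X - 1) * fact (card A - card X))" by simp
      also have "\<dots> = fact (card X) * fact (card A - card X)"
      proof -
        obtain c where c: "card X = Suc c" using cX by (cases "card X") auto
        show ?thesis unfolding c by (simp add: algebra_simps)
      qed
      finally show ?thesis by (rule HOL.sym)
    qed
    have "(\<Sum>X\<in>F. fact (card X) * fact (card A - card X) :: nat) =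
          (\<Sum>X\<in>F. \<Sum>t\<in>X. fact (card (X - {t})) * fact (card (A - {t}) - card (X - {t})))"
      by (intro sum.cong refl step)
    also have "\<dots> = (\<Sum>X\<in>F. \<Sum>t\<in>A. if t \<in> X then fact (card (X - {t})) * fact (card (A - {t}) - card (X - {t})) else (0::nat))"
    proof (rule sum.cong[OF refl])
      fix X assume X: "X \<in> F"
      have XA: "X \<subseteq> A" using X Suc.prems by auto
      show "(\<Sum>t\<in>X. fact (card (X - {t})) * fact (card (A - {t}) - card (X - {t}))) =
         (\<Sum>t\<in>A. if t \<in> X then fact (card (X - {t})) * fact (card (A - {t}) - card (X - {t})) else (0::nat))"
        using XA Suc.prems(1) by (simp add: sum.If_cases Int_absorb1 Int_absorb2)
    qed
    also have "\<dots> = (\<Sum>t\<in>A. \<Sum>X\<in>F. if t \<in> X then fact (card (X - {t})) * fact (card (A - {t}) - card (X - {t})) else (0::nat))"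
      by (rule sum.swap)
    also have "\<dots> \<le> (\<Sum>t\<in>A. fact n)"
    proof (rule sum_mono)
      fix t assume t: "t \<in> A"
      define Ft where "Ft = (\<lambda>X. X - {t}) ` {X\<in>F. t \<in> X}"
      have inj: "inj_on (\<lambda>X. X - {t}) {X\<in>F. t \<in> X}"
        by (rule inj_onI) (metis (no_types, lifting) insert_Diff mem_Collect_eq)
      have "(\<Sum>X\<in>F. if t \<in> X then fact (card (X - {t})) * fact (card (A - {t}) - card (X - {t})) else (0::nat))
          = (\<Sum>X\<in>{X\<in>F. t \<in> X}. fact (card (X - {t})) * fact (card (A - {t}) - card (X - {t})))"
        using finF by (simp add: sum.If_cases Int_def)
      also have "\<dots> = (\<Sum>Y\<in>Ft. fact (card Y) * fact (card (A - {t}) - card Y))"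
        unfolding Ft_def by (subst sum.reindex[OF inj]) simp
      also have "\<dots> \<le> fact (card (A - {t}))"
      proof (rule Suc.hyps)
        show "n = card (A - {t})" using Suc.hyps(2) t Suc.prems(1) by simp
        show "finite (A - {t})" using Suc.prems(1) by simp
        show "Ft \<subseteq> Pow (A - {t})" unfolding Ft_def using Suc.prems(2) by auto
        show "\<forall>X\<in>Ft. \<forall>Y\<in>Ft. \<not> X \<subset> Y"
        proof (intro ballI notI)
          fix X Y assume "X \<in> Ft" "Y \<in> Ft" "X \<subset> Y"
          then obtain X' Y' where "X' \<in> F" "Y' \<in> F" "t \<in> X'" "t \<in> Y'" "X = X' - {t}" "Y = Y' - {t}"
            unfolding Ft_def by auto
          then have "X' \<subset> Y'" using \<open>X \<subset> Y\<close> by blast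
          then show False using Suc.prems(3) \<open>X' \<in> F\<close> \<open>Y' \<in> F\<close> by blast
        qed
      qed
      also have "\<dots> = fact n" using Suc.hyps(2) t Suc.prems(1) by (simp add: card_Diff_singleton flip: Suc.hyps(2))
      finally show "(\<Sum>X\<in>F. if t \<in> X then fact (card (X - {t})) * fact (card (A - {t}) - card (X - {t})) else (0::nat)) \<le> fact n" .
    qed
    also have "\<dots> = fact (card A)" using Suc.hyps(2) by (simp flip: Suc.hyps(2))
    finally show ?thesis .
  qed
qed

lemma lo_pos:
  fixes d :: "'a \<Rightarrow> real"
  assumes A: "finite A" and a: "a > 0" and d: "\<And>g. g \<in> A \<Longrightarrow> d g > 2 * a"
  shows "card {X \<in> Pow A. \<bar>c + (\<Sum>g\<in>X. d g)\<bar> < a} \<le> card A choose (card A div 2)"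
proof -
  define F where "F = {X \<in> Pow A. \<bar>c + (\<Sum>g\<in>X. d g)\<bar> < a}"
  have FA: "F \<subseteq> Pow A" unfolding F_def by auto
  have finF: "finite F" using FA A by (meson finite_Pow_iff rev_finite_subset)
  have anti: "\<forall>X\<in>F. \<forall>Y\<in>F. \<not> X \<subset> Y"
  proof (intro ballI notI)
    fix X Y assume X: "X \<in> F" and Y: "Y \<in> F" and XY: "X \<subset> Y"
    have YA: "Y \<subseteq> A" using Y unfolding F_def by auto
    have fY: "finite Y" using YA A by (rule finite_subset)
    obtain g0 where g0: "g0 \<in> Y - X" using XY by auto
    have "(\<Sum>g\<in>Y. d g) = (\<Sum>g\<in>X. d g) + (\<Sum>g\<in>Y - X. d g)"
      using fY XY by (metis add.commute psubset_imp_subset sum.subset_diff)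
    moreover have "(\<Sum>g\<in>Y - X. d g) \<ge> d g0"
    proof (rule member_le_sum)
      show "g0 \<in> Y - X" by fact
      show "finite (Y - X)" using fY by simp
      fix x assume "x \<in> Y - X - {g0}"
      then have "x \<in> A" using YA by auto
      then show "0 \<le> d x" using d[of x] a by linarith
    qed
    moreover have "d g0 > 2 * a" using g0 YA d by auto
    moreover have "\<bar>c + (\<Sum>g\<in>X. d g)\<bar> < a" "\<bar>c + (\<Sum>g\<in>Y. d g)\<bar> < a" using X Y unfolding F_def by auto
    ultimately show False by linarith
  qed
  define bm where "bm = card A choose (card A div 2)"
  have "card F * fact (card A) = (\<Sum>X\<in>F. fact (card A) :: nat)" by simp
  also have "\<dots> = (\<Sum>X\<in>F. fact (card X) * fact (card A - card X) * (card A choose card X))"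
  proof (rule sum.cong[OF refl])
    fix X assume "X \<in> F"
    then have "card X \<le> card A" using FA A by (meson PowD card_mono subsetD)
    then show "fact (card A) = fact (card X) * fact (card A - card X) * (card A choose card X)"
      by (simp add: binomial_fact_lemma)
  qed
  also have "\<dots> \<le> (\<Sum>X\<in>F. fact (card X) * fact (card A - card X) * bm)"
    unfolding bm_def by (intro sum_mono mult_left_mono binomial_maximum) auto
  also have "\<dots> = (\<Sum>X\<in>F. fact (card X) * fact (card A - card X)) * bm"
    by (simp add: sum_distrib_right)
  also have "\<dots> \<le> fact (card A) * bm"
    using lym_aux[OF A FA anti] by (intro mult_right_mono) auto
  finally have "card F * fact (card A) \<le> bm * fact (card A)" by (simp add: mult.commute)
  then have "card F \<le> bm" by (meson fact_gt_zero mult_le_cancel2 not_le)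
  then show ?thesis unfolding F_def bm_def .
qed

lemma lo_signed:
  fixes d :: "'a \<Rightarrow> real"
  assumes A: "finite A" and a: "a > 0" and d: "\<And>g. g \<in> A \<Longrightarrow> \<bar>d g\<bar> > 2 * a"
  shows "card {X \<in> Pow A. \<bar>c + (\<Sum>g\<in>X. d g)\<bar> < a} \<le> card A choose (card A div 2)"
proof -
  define N where "N = {g\<in>A. d g < 0}"
  define phi where "phi = (\<lambda>X. (X - N) \<union> (N - X))"
  define c' where "c' = c - (\<Sum>g\<in>N. \<bar>d g\<bar>)"
  have NA: "N \<subseteq> A" unfolding N_def by auto
  have finN: "finite N" using NA A by (rule finite_subset)
  have key: "(\<Sum>g\<in>X. d g) = (\<Sum>g\<in>phi X. \<bar>d g\<bar>) - (\<Sum>g\<in>N. \<bar>d g\<bar>)" if X: "X \<subseteq> A" for X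
  proof -
    have fX: "finite X" using X A by (rule finite_subset)
    have s1: "(\<Sum>g\<in>X. d g) = (\<Sum>g\<in>X - N. d g) + (\<Sum>g\<in>X \<inter> N. d g)"
    proof -
      have "X = (X - N) \<union> (X \<inter> N)" by blast
      then have "sum d X = sum d ((X - N) \<union> (X \<inter> N))" by (rule arg_cong)
      also have "\<dots> = sum d (X - N) + sum d (X \<inter> N)" using fX by (intro sum.union_disjoint) auto
      finally show ?thesis .
    qed
    have s2: "(\<Sum>g\<in>X - N. d g) = (\<Sum>g\<in>X - N. \<bar>d g\<bar>)"
      by (rule sum.cong) (auto simp: N_def dest: subsetD[OF X])
    have s3: "(\<Sum>g\<in>X \<inter> N. d g) = - (\<Sum>g\<in>X \<inter> N. \<bar>d g\<bar>)"
    proof -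
      have "(\<Sum>g\<in>X \<inter> N. d g) = (\<Sum>g\<in>X \<inter> N. - \<bar>d g\<bar>)" by (rule sum.cong) (auto simp: N_def)
      then show ?thesis by (simp add: sum_negf)
    qed
    have s4: "(\<Sum>g\<in>phi X. \<bar>d g\<bar>) = (\<Sum>g\<in>X - N. \<bar>d g\<bar>) + (\<Sum>g\<in>N - X. \<bar>d g\<bar>)"
      unfolding phi_def using fX finN by (intro sum.union_disjoint) auto
    have s5: "(\<Sum>g\<in>N. \<bar>d g\<bar>) = (\<Sum>g\<in>N - X. \<bar>d g\<bar>) + (\<Sum>g\<in>X \<inter> N. \<bar>d g\<bar>)"
    proof -
      have "N = (N - X) \<union> (X \<inter> N)" by blast
      then have "(\<Sum>g\<in>N. \<bar>d g\<bar>) = (\<Sum>g\<in>(N - X) \<union> (X \<inter> N). \<bar>d g\<bar>)" by (rule arg_cong)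
      also have "\<dots> = (\<Sum>g\<in>N - X. \<bar>d g\<bar>) + (\<Sum>g\<in>X \<inter> N. \<bar>d g\<bar>)" using finN by (intro sum.union_disjoint) auto
      finally show ?thesis .
    qed
    show ?thesis using s1 s2 s3 s4 s5 by linarith
  qed
  have phiA: "phi X \<in> Pow A" if "X \<in> Pow A" for X using that NA unfolding phi_def by auto
  have phiphi: "phi (phi X) = X" for X unfolding phi_def by auto
  have inj: "inj_on phi UNIV"
  proof (rule inj_onI)
    fix x y assume "phi x = phi y"
    then have "phi (phi x) = phi (phi y)" by simp
    then show "x = y" by (simp add: phiphi)
  qed
  have sub: "phi ` {X \<in> Pow A. \<bar>c + (\<Sum>g\<in>X. d g)\<bar> < a} \<subseteq> {Y \<in> Pow A. \<bar>c' + (\<Sum>g\<in>Y. \<bar>d g\<bar>)\<bar> < a}"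
  proof
    fix Y assume "Y \<in> phi ` {X \<in> Pow A. \<bar>c + (\<Sum>g\<in>X. d g)\<bar> < a}"
    then obtain X where X: "X \<in> Pow A" "\<bar>c + (\<Sum>g\<in>X. d g)\<bar> < a" and Y: "Y = phi X" by auto
    have "c + (\<Sum>g\<in>X. d g) = c' + (\<Sum>g\<in>Y. \<bar>d g\<bar>)" using key[of X] X(1) Y unfolding c'_def by simp
    then show "Y \<in> {Y \<in> Pow A. \<bar>c' + (\<Sum>g\<in>Y. \<bar>d g\<bar>)\<bar> < a}" using X phiA Y by auto
  qed
  have "card {X \<in> Pow A. \<bar>c + (\<Sum>g\<in>X. d g)\<bar> < a} = card (phi ` {X \<in> Pow A. \<bar>c + (\<Sum>g\<in>X. d g)\<bar> < a})"
    by (rule card_image[symmetric]) (meson inj inj_on_subset subset_UNIV)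
  also have "\<dots> \<le> card {Y \<in> Pow A. \<bar>c' + (\<Sum>g\<in>Y. \<bar>d g\<bar>)\<bar> < a}"
    using A by (intro card_mono sub) auto
  also have "\<dots> \<le> card A choose (card A div 2)"
    by (rule lo_pos[OF A a]) (use d in auto)
  finally show ?thesis .
qed

lemma lo_active:
  fixes d :: "'a \<Rightarrow> real"
  assumes G: "finite G" and AG: "Act \<subseteq> G" and a: "a > 0" and d: "\<And>g. g \<in> Act \<Longrightarrow> \<bar>d g\<bar> > 2 * a"
  shows "card {B \<in> Pow G. \<bar>c + (\<Sum>g\<in>B \<inter> Act. d g)\<bar> < a}
           \<le> (card Act choose (card Act div 2)) * 2 ^ (card G - card Act)"
proof -
  have fA: "finite Act" using AG G by (rule finite_subset)
  let ?S = "{Y \<in> Pow Act. \<bar>c + (\<Sum>g\<in>Y. d g)\<bar> < a}"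
  have "card {B \<in> Pow G. \<bar>c + (\<Sum>g\<in>B \<inter> Act. d g)\<bar> < a} \<le> card (?S \<times> Pow (G - Act))"
  proof (rule card_inj_on_le[where f = "\<lambda>B. (B \<inter> Act, B - Act)"])
    show "inj_on (\<lambda>B. (B \<inter> Act, B - Act)) {B \<in> Pow G. \<bar>c + (\<Sum>g\<in>B \<inter> Act. d g)\<bar> < a}"
    proof (rule inj_onI)
      fix B B' assume "(B \<inter> Act, B - Act) = (B' \<inter> Act, B' - Act)"
      then have "B \<inter> Act = B' \<inter> Act" "B - Act = B' - Act" by simp_all
      then show "B = B'" by (metis Int_Diff_Un)
    qed
    show "(\<lambda>B. (B \<inter> Act, B - Act)) ` {B \<in> Pow G. \<bar>c + (\<Sum>g\<in>B \<inter> Act. d g)\<bar> < a} \<subseteq> ?S \<times> Pow (G - Act)"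
      by auto
    show "finite (?S \<times> Pow (G - Act))" using G fA by auto
  qed
  also have "\<dots> = card ?S * 2 ^ (card G - card Act)"
    using G fA AG by (simp add: card_cartesian_product card_Pow card_Diff_subset)
  also have "\<dots> \<le> (card Act choose (card Act div 2)) * 2 ^ (card G - card Act)"
    by (intro mult_right_mono lo_signed[OF fA a d]) auto
  finally show ?thesis .
qed

definition beta :: "nat \<Rightarrow> real" where
  "beta T = real (T choose (T div 2)) / 2 ^ T"

lemma lo_beta:
  fixes d :: "'a \<Rightarrow> real"
  assumes G: "finite G" and AG: "Act \<subseteq> G" and a: "a > 0" and d: "\<And>g. g \<in> Act \<Longrightarrow> \<bar>d g\<bar> > 2 * a"
  shows "real (card {B \<in> Pow G. \<bar>c + (\<Sum>g\<in>B \<inter> Act. d g)\<bar> < a}) / 2 ^ card G \<le> beta (card Act)"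
proof -
  have fA: "finite Act" using AG G by (rule finite_subset)
  have le: "card Act \<le> card G" by (rule card_mono[OF G AG])
  have "real (card {B \<in> Pow G. \<bar>c + (\<Sum>g\<in>B \<inter> Act. d g)\<bar> < a})
        \<le> real (card Act choose (card Act div 2)) * 2 ^ (card G - card Act)"
  proof -
    have h: "card {B \<in> Pow G. \<bar>c + (\<Sum>g\<in>B \<inter> Act. d g)\<bar> < a}
           \<le> (card Act choose (card Act div 2)) * 2 ^ (card G - card Act)" by (rule lo_active[OF G AG a d])
    have "real (card {B \<in> Pow G. \<bar>c + (\<Sum>g\<in>B \<inter> Act. d g)\<bar> < a})
           \<le> real ((card Act choose (card Act div 2)) * 2 ^ (card G - card Act))" using h by (rule of_nat_mono)
    then show ?thesis by simp
  qed
  also have "\<dots> = beta (card Act) * 2 ^ card G"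
    unfolding beta_def using le by (simp add: power_diff)
  finally show ?thesis by (simp add: divide_le_eq)
qed

lemma beta_le_1: "beta T \<le> 1"
proof -
  have "real (T choose (T div 2)) \<le> 2 ^ T"
  proof -
    have "real (T choose (T div 2)) \<le> real ((2::nat) ^ T)" using binomial_le_pow2[of T "T div 2"] by (rule of_nat_mono)
    then show ?thesis by simp
  qed
  then show ?thesis unfolding beta_def by simp
qed

lemma beta_nonneg: "beta T \<ge> 0" unfolding beta_def by simp

lemma beta_0: "beta 0 = 1" and beta_1: "beta 1 = 1/2" unfolding beta_def by auto


lemma binom_central_fact: "real ((2*m) choose m) = fact (2*m) / (fact m)^2"
  by (simp add: binomial_fact power2_eq_square)

lemma alg1: "(G::real) \<noteq> 0 \<Longrightarrow> x \<noteq> 0 \<Longrightarrow> (k::real) \<noteq> 0 \<Longrightarrow>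
  ((2*k)*(2*k-1)*F / (k*G)^2) / (4*x) = (F/G^2/x) * ((2*k-1)/(2*k))"
  by (simp add: field_simps power2_eq_square)
lemma alg2: "(G::real) \<noteq> 0 \<Longrightarrow> x \<noteq> 0 \<Longrightarrow> (k::real) \<noteq> 0 \<Longrightarrow>
  ((2*k-1)*F / (G * (k*G))) / (2*x) = (F/G^2/x) * ((2*k-1)/(2*k))"
  by (simp add: field_simps power2_eq_square)
lemma alg3: "(k::real) \<ge> 1 \<Longrightarrow> (1/(2*k-1))*((2*k-1)/(2*k))^2 \<le> 1/(2*k+1)"
  by (simp add: field_simps power2_eq_square)

lemma central_sq: "(real ((2*m) choose m) / 4 ^ m)^2 \<le> 1 / (2*m+1)"
proof (induction m)
  case 0 then show ?case by simp
next
  case (Suc m)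
  define c where "c = real ((2*m) choose m) / 4 ^ m"
  define k where "k = real m + 1"
  have k1: "k \<ge> 1" unfolding k_def by simp
  have ss: "2 * Suc m = Suc (Suc (2*m))" by simp
  have f1: "fact (2 * Suc m) = (2*k)*(2*k-1) * (fact (2*m) :: real)"
    unfolding ss k_def by (simp add: algebra_simps)
  have f2: "fact (Suc m) = k * (fact m :: real)" unfolding k_def by simp
  have "real ((2 * Suc m) choose Suc m) / 4 ^ Suc m = ((2*k)*(2*k-1)*fact (2*m) / (k*fact m)^2) / (4*4^m)"
    unfolding binom_central_fact f1 f2 by simp
  also have "\<dots> = c * ((2*k-1)/(2*k))"
    unfolding c_def binom_central_fact using k1 by (subst alg1) auto
  finally have eq: "real ((2 * Suc m) choose Suc m) / 4 ^ Suc m = c * ((2*k-1)/(2*k))" .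
  have "(real ((2 * Suc m) choose Suc m) / 4 ^ Suc m)^2 = c^2 * ((2*k-1)/(2*k))^2"
    unfolding eq by (simp only: power_mult_distrib)
  also have "\<dots> \<le> (1/(2*k-1)) * ((2*k-1)/(2*k))^2"
    using Suc.IH unfolding c_def k_def by (intro mult_right_mono) (auto simp: algebra_simps)
  also have "\<dots> \<le> 1/(2*k+1)" using alg3[OF k1] .
  also have "\<dots> = 1 / (2 * real (Suc m) + 1)" unfolding k_def by (simp add: algebra_simps)
  finally show ?case .
qed

lemma beta_sq: "(beta T)^2 \<le> 1 / (T + 1)"
proof (cases "even T")
  case True
  then obtain m where T: "T = 2*m" by auto
  have "beta T = real ((2*m) choose m) / 4 ^ m" unfolding beta_def T by (simp add: power_mult)
  then show ?thesis using central_sq[of m] T by simp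
next
  case False
  then obtain m where T: "T = Suc (2*m)" by (metis oddE Suc_eq_plus1)
  define c where "c = real ((2*m) choose m) / 4 ^ m"
  define k where "k = real m + 1"
  have k1: "k \<ge> 1" unfolding k_def by simp
  have b: "real ((Suc (2*m)) choose m) = fact (Suc (2*m)) / (fact m * fact (Suc m))"
    by (subst binomial_fact) auto
  have f1: "fact (Suc (2*m)) = (2*k-1) * (fact (2*m) :: real)" unfolding k_def by (simp add: algebra_simps)
  have f2: "fact (Suc m) = k * (fact m :: real)" unfolding k_def by simp
  have p: "(2::real) ^ Suc (2*m) = 2 * 4^m" by (simp add: power_mult)
  have "beta T = real ((Suc (2*m)) choose m) / 2 ^ Suc (2*m)" unfolding beta_def T by simp
  also have "\<dots> = ((2*k-1)*fact (2*m) / (fact m * (k*fact m))) / (2*4^m)"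
    unfolding b f1 f2 p by simp
  also have "\<dots> = c * ((2*k-1)/(2*k))"
    unfolding c_def binom_central_fact using k1 by (subst alg2) auto
  finally have eq: "beta T = c * ((2*k-1)/(2*k))" .
  have "(beta T)^2 = c^2 * ((2*k-1)/(2*k))^2" unfolding eq by (simp only: power_mult_distrib)
  also have "\<dots> \<le> (1/(2*k-1)) * ((2*k-1)/(2*k))^2"
    using central_sq[of m] unfolding c_def k_def by (intro mult_right_mono) (auto simp: algebra_simps)
  also have "\<dots> \<le> 1/(2*k+1)" using alg3[OF k1] .
  also have "\<dots> \<le> 1 / (real T + 1)" unfolding T k_def by (simp add: field_simps)
  finally show ?thesis .
qed

lemma exp_sum:
  assumes "finite S" "set_pmf M \<subseteq> S"
  shows "measure_pmf.expectation M f = (\<Sum>s\<in>S. f s * pmf M s)"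
  using assms by (intro integral_measure_pmf_real) auto

lemma prob_sum:
  assumes "finite S" "set_pmf M \<subseteq> S"
  shows "measure_pmf.prob M E = (\<Sum>s\<in>S. indicator E s * pmf M s)"
proof -
  have "measure_pmf.prob M E = measure_pmf.expectation M (indicator E)" by simp
  also have "\<dots> = (\<Sum>s\<in>S. indicator E s * pmf M s)" by (rule exp_sum[OF assms])
  finally show ?thesis .
qed

lemma finite_bool_funs: "finite A \<Longrightarrow> finite {f :: 'a \<Rightarrow> bool. \<forall>x. x \<notin> A \<longrightarrow> f x = False}"
proof -
  assume A: "finite A"
  have "{f :: 'a \<Rightarrow> bool. \<forall>x. x \<notin> A \<longrightarrow> f x = False} = PiE_dflt A False (\<lambda>_. UNIV)"
    by (auto simp: PiE_dflt_def)
  then show ?thesis using A by (simp add: finite_PiE_dflt)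
qed

lemma set_Pi_bool: "finite A \<Longrightarrow> set_pmf (Pi_pmf A False p) \<subseteq> {f :: 'a \<Rightarrow> bool. \<forall>x. x \<notin> A \<longrightarrow> f x = False}"
  by (rule set_Pi_pmf_subset)

lemma Pi_pmf_nested:
  fixes D :: "'c pmf"
  assumes I: "finite I" and J: "finite J"
  shows "Pi_pmf (I \<times> J) dflt (\<lambda>_. D) =
         map_pmf (\<lambda>h (i,j). h i j) (Pi_pmf I (\<lambda>_. dflt) (\<lambda>_. Pi_pmf J dflt (\<lambda>_. D)))"
    (is "_ = map_pmf ?F ?M")
proof (rule pmf_eqI)
  fix g :: "'a \<times> 'b \<Rightarrow> 'c"
  have supp: "h i = (\<lambda>_. dflt)" if "h \<in> set_pmf ?M" "i \<notin> I" for h i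
    using set_Pi_pmf_subset[OF I, of "\<lambda>_. dflt" "\<lambda>_. Pi_pmf J dflt (\<lambda>_. D)"] that by auto
  have supp2: "h i j = dflt" if "h \<in> set_pmf ?M" "i \<in> I" "j \<notin> J" for h i j
  proof -
    have "h i \<in> set_pmf (Pi_pmf J dflt (\<lambda>_. D))"
      using that I by (auto simp: set_Pi_pmf PiE_dflt_def)
    then show ?thesis using set_Pi_pmf_subset[OF J, of dflt "\<lambda>_. D"] that by auto
  qed
  show "pmf (Pi_pmf (I \<times> J) dflt (\<lambda>_. D)) g = pmf (map_pmf ?F ?M) g"
  proof (cases "\<forall>x. x \<notin> I \<times> J \<longrightarrow> g x = dflt")
    case True
    define h0 where "h0 = (\<lambda>i j. if i \<in> I then g (i, j) else dflt)"
    have "?F -` {g} \<inter> set_pmf ?M = {h0} \<inter> set_pmf ?M"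
    proof (intro equalityI subsetI)
      fix h assume h: "h \<in> ?F -` {g} \<inter> set_pmf ?M"
      have "h = h0"
      proof (intro ext)
        fix i j show "h i j = h0 i j"
        proof (cases "i \<in> I")
          case True then show ?thesis using h unfolding h0_def by (auto dest: fun_cong[of _ _ "(i,j)"])
        next
          case False then show ?thesis using h supp unfolding h0_def by auto
        qed
      qed
      then show "h \<in> {h0} \<inter> set_pmf ?M" using h by auto
    next
      fix h assume h: "h \<in> {h0} \<inter> set_pmf ?M"
      then have "h = h0" by auto
      have "?F h0 = g"
      proof
        fix x show "?F h0 x = g x"
          using True by (cases x) (auto simp: h0_def)
      qed
      then show "h \<in> ?F -` {g} \<inter> set_pmf ?M" using h \<open>h = h0\<close> by auto
    qed
    note eq = this
    have "pmf (map_pmf ?F ?M) g = measure ?M (?F -` {g})" by (rule pmf_map)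
    also have "\<dots> = measure ?M (?F -` {g} \<inter> set_pmf ?M)" by (rule measure_Int_set_pmf[symmetric])
    also have "\<dots> = measure ?M ({h0} \<inter> set_pmf ?M)" by (simp only: eq)
    also have "\<dots> = measure ?M {h0}" by (rule measure_Int_set_pmf)
    also have "\<dots> = pmf ?M h0" by (rule measure_pmf_single)
    also have "\<dots> = (\<Prod>i\<in>I. pmf (Pi_pmf J dflt (\<lambda>_. D)) (h0 i))"
      using I by (intro pmf_Pi') (auto simp: h0_def)
    also have "\<dots> = (\<Prod>i\<in>I. \<Prod>j\<in>J. pmf D (g (i, j)))"
    proof (rule prod.cong[OF refl])
      fix i assume i: "i \<in> I"
      have "pmf (Pi_pmf J dflt (\<lambda>_. D)) (h0 i) = (\<Prod>j\<in>J. pmf D (h0 i j))"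
        using J True i by (intro pmf_Pi') (auto simp: h0_def)
      then show "pmf (Pi_pmf J dflt (\<lambda>_. D)) (h0 i) = (\<Prod>j\<in>J. pmf D (g (i, j)))"
        using i by (simp add: h0_def)
    qed
    also have "\<dots> = (\<Prod>x\<in>I \<times> J. pmf D (g x))"
      by (simp add: prod.cartesian_product)
    also have "\<dots> = pmf (Pi_pmf (I \<times> J) dflt (\<lambda>_. D)) g"
      using I J True by (intro pmf_Pi'[symmetric]) auto
    finally show ?thesis by simp
  next
    case False
    then obtain x where x: "x \<notin> I \<times> J" "g x \<noteq> dflt" by auto
    have "?F -` {g} \<inter> set_pmf ?M = {}"
    proof (intro equalityI subsetI)
      fix h assume h: "h \<in> ?F -` {g} \<inter> set_pmf ?M"
      obtain i j where xij: "x = (i, j)" by (cases x)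
      have "g (i, j) = h i j" using h by auto
      moreover have "h i j = dflt"
        using x xij h supp supp2 by (cases "i \<in> I") auto
      ultimately show "h \<in> {}" using x xij by simp
    qed auto
    note eq = this
    have "pmf (map_pmf ?F ?M) g = measure ?M (?F -` {g})" by (rule pmf_map)
    also have "\<dots> = measure ?M (?F -` {g} \<inter> set_pmf ?M)" by (rule measure_Int_set_pmf[symmetric])
    also have "\<dots> = 0" by (simp only: eq measure_empty)
    finally have "pmf (map_pmf ?F ?M) g = 0" .
    moreover have ex: "\<exists>y. y \<notin> I \<times> J \<and> g y \<noteq> dflt" using x by blast
    have "pmf (Pi_pmf (I \<times> J) dflt (\<lambda>_. D)) g = 0"
      using pmf_Pi_outside[OF finite_cartesian_product[OF I J] ex] .
    ultimately show ?thesis by simp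
  qed
qed

lemma expectation_rows:
  fixes f :: "('b \<Rightarrow> bool) \<Rightarrow> real"
  assumes I: "finite I" and J: "finite J" and nn: "\<And>r. f r \<ge> 0"
  shows "measure_pmf.expectation (Pi_pmf (I \<times> J) False (\<lambda>_. D)) (\<lambda>A. \<Prod>i\<in>I. f (\<lambda>j. A (i, j)))
         = (measure_pmf.expectation (Pi_pmf J False (\<lambda>_. D)) f) ^ card I"
proof -
  let ?M = "Pi_pmf I (\<lambda>_. False) (\<lambda>_. Pi_pmf J False (\<lambda>_. D))"
  have fin: "finite (set_pmf (Pi_pmf J False (\<lambda>_. D)))"
    using finite_bool_funs[OF J] set_Pi_bool[OF J] by (rule finite_subset[rotated])
  have "measure_pmf.expectation (Pi_pmf (I \<times> J) False (\<lambda>_. D)) (\<lambda>A. \<Prod>i\<in>I. f (\<lambda>j. A (i, j)))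
      = measure_pmf.expectation ?M (\<lambda>h. \<Prod>i\<in>I. f (h i))"
    unfolding Pi_pmf_nested[OF I J] by simp
  also have "\<dots> = (\<Prod>i\<in>I. measure_pmf.expectation (Pi_pmf J False (\<lambda>_. D)) f)"
    by (rule expectation_prod_Pi_pmf[OF I]) (auto intro: integrable_measure_pmf_finite[OF fin] nn)
  also have "\<dots> = (measure_pmf.expectation (Pi_pmf J False (\<lambda>_. D)) f) ^ card I" by simp
  finally show ?thesis .
qed

type_synonym vec = "nat + nat \<times> nat \<Rightarrow> bool"

definition pt :: "nat \<Rightarrow> nat \<Rightarrow> nat" where
  "pt m t = (if t < m then t + m else t - m)"

definition oh :: "nat \<Rightarrow> vec \<Rightarrow> nat \<Rightarrow> bool" where
  "oh m s g = (card {t\<in>{..<2*m}. s (Inr (g, t))} = 1)"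

definition cnd :: "nat \<Rightarrow> nat \<Rightarrow> nat set \<Rightarrow> vec \<Rightarrow> nat \<Rightarrow> nat \<Rightarrow> bool" where
  "cnd k m B s g t = (g \<in> B \<and> g < k \<and> t < 2*m \<and> oh m s g)"

definition sig :: "nat \<Rightarrow> nat \<Rightarrow> nat set \<Rightarrow> vec \<Rightarrow> nat + nat \<times> nat \<Rightarrow> nat + nat \<times> nat" where
  "sig k m B s d = (case d of Inl w \<Rightarrow> Inl w
      | Inr gt \<Rightarrow> (if cnd k m B s (fst gt) (snd gt) then Inr (fst gt, pt m (snd gt)) else Inr gt))"

definition tau :: "nat \<Rightarrow> nat \<Rightarrow> nat set \<Rightarrow> vec \<Rightarrow> vec" where
  "tau k m B s = s \<circ> sig k m B s"

lemma pt_lt: "t < 2*m \<Longrightarrow> pt m t < 2*m" unfolding pt_def by auto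
lemma pt_pt: "t < 2*m \<Longrightarrow> pt m (pt m t) = t" unfolding pt_def by auto

lemma card_pt: "card {t\<in>{..<2*m}. P (pt m t)} = card {t\<in>{..<2*m}. P t}"
proof -
  have "{t\<in>{..<2*m}. P (pt m t)} = pt m ` {t\<in>{..<2*m}. P t}"
  proof (intro equalityI subsetI)
    fix t assume "t \<in> {t\<in>{..<2*m}. P (pt m t)}"
    then have "t < 2*m" "P (pt m t)" by auto
    then show "t \<in> pt m ` {t\<in>{..<2*m}. P t}"
      by (intro image_eqI[of _ _ "pt m t"]) (auto simp: pt_pt pt_lt)
  next
    fix t assume "t \<in> pt m ` {t\<in>{..<2*m}. P t}"
    then obtain u where "u < 2*m" "P u" "t = pt m u" by auto
    then show "t \<in> {t\<in>{..<2*m}. P (pt m t)}" by (auto simp: pt_pt pt_lt)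
  qed
  moreover have "inj_on (pt m) {t\<in>{..<2*m}. P t}"
    by (rule inj_onI) (metis (no_types, lifting) lessThan_iff mem_Collect_eq pt_pt)
  ultimately show ?thesis by (simp add: card_image)
qed

lemma oh_tau: "oh m (tau k m B s) g = oh m s g"
proof (cases "g \<in> B \<and> g < k \<and> oh m s g")
  case True
  have "{t\<in>{..<2*m}. tau k m B s (Inr (g, t))} = {t\<in>{..<2*m}. s (Inr (g, pt m t))}"
    using True by (auto simp: tau_def sig_def cnd_def)
  then have "card {t\<in>{..<2*m}. tau k m B s (Inr (g, t))} = card {t\<in>{..<2*m}. s (Inr (g, pt m t))}"
    by (rule arg_cong[where f=card])
  also have "\<dots> = card {t\<in>{..<2*m}. s (Inr (g, t))}" by (rule card_pt)
  finally show ?thesis unfolding oh_def by simp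
next
  case False
  have "{t\<in>{..<2*m}. tau k m B s (Inr (g, t))} = {t\<in>{..<2*m}. s (Inr (g, t))}"
    using False by (auto simp: tau_def sig_def cnd_def)
  then show ?thesis unfolding oh_def by simp
qed

lemma cnd_tau: "cnd k m B (tau k m B s) = cnd k m B s"
  by (intro ext) (simp add: cnd_def oh_tau)

lemma sig_tau: "sig k m B (tau k m B s) = sig k m B s"
  unfolding sig_def cnd_tau ..

lemma sig_sig: "sig k m B s (sig k m B s d) = d"
proof (cases d)
  case (Inl w) then show ?thesis by (simp add: sig_def)
next
  case (Inr gt)
  obtain g t where gt: "gt = (g, t)" by (cases gt)
  show ?thesis
  proof (cases "cnd k m B s g t")
    case True
    then have "t < 2*m" by (simp add: cnd_def)
    then have "cnd k m B s g (pt m t)" using True by (simp add: cnd_def pt_lt)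
    then show ?thesis using True Inr gt \<open>t < 2*m\<close> by (simp add: sig_def pt_pt)
  next
    case False then show ?thesis using Inr gt by (simp add: sig_def)
  qed
qed

lemma tau_tau: "tau k m B (tau k m B s) = s"
proof -
  have "tau k m B (tau k m B s) = (s \<circ> sig k m B s) \<circ> sig k m B s"
    unfolding tau_def[of k m B "tau k m B s"] sig_tau by (simp add: tau_def)
  also have "\<dots> = s" by (intro ext) (simp add: sig_sig)
  finally show ?thesis .
qed

definition Dset :: "nat set \<Rightarrow> nat \<Rightarrow> nat \<Rightarrow> (nat + nat \<times> nat) set" where
  "Dset W k m = Inl ` W \<union> Inr ` ({..<k} \<times> {..<2*m})"

lemma sig_D: "d \<in> Dset W k m \<Longrightarrow> sig k m B s d \<in> Dset W k m"
  by (auto simp: Dset_def sig_def cnd_def pt_lt split: sum.splits)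

lemma sig_notD: "d \<notin> Dset W k m \<Longrightarrow> sig k m B s d = d"
  by (auto simp: Dset_def sig_def cnd_def split: sum.splits)

lemma bij_sig: "bij_betw (sig k m B s) (Dset W k m) (Dset W k m)"
  by (rule bij_betwI[where g = "sig k m B s"]) (auto simp: sig_D sig_sig)

definition Sset :: "nat set \<Rightarrow> nat \<Rightarrow> nat \<Rightarrow> vec set" where
  "Sset W k m = {s. \<forall>d. d \<notin> Dset W k m \<longrightarrow> s d = False}"

lemma tau_S: "s \<in> Sset W k m \<Longrightarrow> tau k m B s \<in> Sset W k m"
  by (auto simp: Sset_def tau_def sig_notD)

lemma finite_D: "finite W \<Longrightarrow> finite (Dset W k m)" by (simp add: Dset_def)

lemma finite_S: "finite W \<Longrightarrow> finite (Sset W k m)"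
  unfolding Sset_def by (rule finite_bool_funs[OF finite_D])

lemma set_pmf_S: "finite W \<Longrightarrow> set_pmf (Pi_pmf (Dset W k m) False P) \<subseteq> Sset W k m"
  unfolding Sset_def by (rule set_Pi_bool[OF finite_D])

lemma pmf_tau:
  assumes W: "finite W" and s: "s \<in> Sset W k m"
  shows "pmf (Pi_pmf (Dset W k m) False (\<lambda>_. P)) (tau k m B s) = pmf (Pi_pmf (Dset W k m) False (\<lambda>_. P)) s"
proof -
  have t: "tau k m B s \<in> Sset W k m" using tau_S[OF s] .
  have "pmf (Pi_pmf (Dset W k m) False (\<lambda>_. P)) (tau k m B s) = (\<Prod>d\<in>Dset W k m. pmf P (s (sig k m B s d)))"
    using t by (subst pmf_Pi') (auto simp: finite_D[OF W] Sset_def tau_def)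
  also have "\<dots> = (\<Prod>d\<in>Dset W k m. pmf P (s d))"
    by (rule prod.reindex_bij_betw[OF bij_sig, of "\<lambda>d. pmf P (s d)"])
  also have "\<dots> = pmf (Pi_pmf (Dset W k m) False (\<lambda>_. P)) s"
    using s by (subst pmf_Pi') (auto simp: finite_D[OF W] Sset_def)
  finally show ?thesis .
qed

definition val :: "nat set \<Rightarrow> nat \<Rightarrow> nat \<Rightarrow> (nat + nat \<times> nat \<Rightarrow> real) \<Rightarrow> vec \<Rightarrow> real" where
  "val W k m z s = (\<Sum>d\<in>Dset W k m. if s d then z d else 0)"
definition cg :: "nat \<Rightarrow> (nat + nat \<times> nat \<Rightarrow> real) \<Rightarrow> vec \<Rightarrow> nat \<Rightarrow> real" where
  "cg m z s g = (\<Sum>t<2*m. if s (Inr (g, t)) then z (Inr (g, t)) else 0)"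
definition cg' :: "nat \<Rightarrow> (nat + nat \<times> nat \<Rightarrow> real) \<Rightarrow> vec \<Rightarrow> nat \<Rightarrow> real" where
  "cg' m z s g = (\<Sum>t<2*m. if s (Inr (g, pt m t)) then z (Inr (g, t)) else 0)"
definition v0 :: "nat set \<Rightarrow> (nat + nat \<times> nat \<Rightarrow> real) \<Rightarrow> vec \<Rightarrow> real" where
  "v0 W z s = (\<Sum>w\<in>W. if s (Inl w) then z (Inl w) else 0)"
definition Act :: "nat \<Rightarrow> nat \<Rightarrow> vec \<Rightarrow> nat set" where
  "Act k m s = {g\<in>{..<k}. oh m s g}"

lemma val_decomp:
  assumes W: "finite W"
  shows "val W k m z s = v0 W z s + (\<Sum>g<k. cg m z s g)"
proof -
  let ?f = "\<lambda>d. if s d then z d else 0"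
  have "val W k m z s = sum ?f (Inl ` W) + sum ?f (Inr ` ({..<k} \<times> {..<2*m}))"
    unfolding val_def Dset_def using W by (intro sum.union_disjoint) auto
  also have "sum ?f (Inl ` W) = v0 W z s"
    unfolding v0_def by (subst sum.reindex) (auto intro: inj_onI)
  also have "sum ?f (Inr ` ({..<k} \<times> {..<2*m})) = (\<Sum>gt\<in>{..<k} \<times> {..<2*m}. ?f (Inr gt))"
    by (subst sum.reindex) (auto intro: inj_onI)
  also have "\<dots> = (\<Sum>g<k. \<Sum>t<2*m. ?f (Inr (g, t)))"
    by (subst sum.cartesian_product) (rule sum.cong, auto)
  also have "\<dots> = (\<Sum>g<k. cg m z s g)" unfolding cg_def ..
  finally show ?thesis .
qed

lemma v0_tau: "v0 W z (tau k m B s) = v0 W z s"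
  unfolding v0_def tau_def sig_def by simp

lemma cg_tau: "cg m z (tau k m B s) g = (if g \<in> B \<and> g < k \<and> oh m s g then cg' m z s g else cg m z s g)"
  unfolding cg_def cg'_def tau_def sig_def cnd_def
  by (auto intro!: sum.cong)

lemma val_tau:
  assumes W: "finite W"
  shows "val W k m z (tau k m B s) = val W k m z s + (\<Sum>g\<in>B \<inter> Act k m s. cg' m z s g - cg m z s g)"
proof -
  have "val W k m z (tau k m B s) = v0 W z s + (\<Sum>g<k. if g \<in> B \<and> oh m s g then cg' m z s g else cg m z s g)"
    unfolding val_decomp[OF W] v0_tau cg_tau by simp
  also have "(\<Sum>g<k. if g \<in> B \<and> oh m s g then cg' m z s g else cg m z s g)
      = (\<Sum>g<k. cg m z s g) + (\<Sum>g<k. if g \<in> B \<inter> Act k m s then cg' m z s g - cg m z s g else 0)"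
    by (subst sum.distrib[symmetric]) (auto intro!: sum.cong simp: Act_def)
  also have "(\<Sum>g<k. if g \<in> B \<inter> Act k m s then cg' m z s g - cg m z s g else 0)
      = (\<Sum>g\<in>{..<k} \<inter> (B \<inter> Act k m s). cg' m z s g - cg m z s g)"
    by (rule sum.inter_restrict[symmetric]) simp
  also have "{..<k} \<inter> (B \<inter> Act k m s) = B \<inter> Act k m s" by (auto simp: Act_def)
  finally show ?thesis unfolding val_decomp[OF W] by simp
qed

lemma gap:
  assumes a: "a > 0"
    and big: "\<And>g t. g < k \<Longrightarrow> t < m \<Longrightarrow> \<bar>z (Inr (g, t))\<bar> \<ge> 3 * a"
    and small: "\<And>g t. g < k \<Longrightarrow> m \<le> t \<Longrightarrow> t < 2*m \<Longrightarrow> \<bar>z (Inr (g, t))\<bar> < a"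
    and g: "g \<in> Act k m s"
  shows "\<bar>cg' m z s g - cg m z s g\<bar> > 2 * a"
proof -
  have gk: "g < k" and o: "card {t\<in>{..<2*m}. s (Inr (g, t))} = 1" using g by (auto simp: Act_def oh_def)
  then obtain t0 where t0: "{t\<in>{..<2*m}. s (Inr (g, t))} = {t0}" by (meson card_1_singletonE)
  then have t0lt: "t0 < 2*m" by auto
  have c1: "cg m z s g = z (Inr (g, t0))"
  proof -
    have "cg m z s g = (\<Sum>t\<in>{t\<in>{..<2*m}. s (Inr (g, t))}. z (Inr (g, t)))"
      unfolding cg_def by (rule sum.inter_filter[symmetric]) simp
    then show ?thesis using t0 by simp
  qed
  have e: "{t\<in>{..<2*m}. s (Inr (g, pt m t))} = {pt m t0}"
  proof (intro equalityI subsetI)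
    fix t assume "t \<in> {t\<in>{..<2*m}. s (Inr (g, pt m t))}"
    then have "t < 2*m" "s (Inr (g, pt m t))" by auto
    then have "pt m t \<in> {t\<in>{..<2*m}. s (Inr (g, t))}" by (auto simp: pt_lt)
    then have "pt m t = t0" using t0 by auto
    then show "t \<in> {pt m t0}" using \<open>t < 2*m\<close> pt_pt by fastforce
  next
    fix t assume "t \<in> {pt m t0}"
    then have "t = pt m t0" by simp
    moreover have "t0 \<in> {t\<in>{..<2*m}. s (Inr (g, t))}" using t0 by simp
    ultimately show "t \<in> {t\<in>{..<2*m}. s (Inr (g, pt m t))}" using t0lt by (auto simp: pt_pt pt_lt)
  qed
  have c2: "cg' m z s g = z (Inr (g, pt m t0))"
  proof -
    have "cg' m z s g = (\<Sum>t\<in>{t\<in>{..<2*m}. s (Inr (g, pt m t))}. z (Inr (g, t)))"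
      unfolding cg'_def by (rule sum.inter_filter[symmetric]) simp
    then show ?thesis using e by simp
  qed
  show ?thesis
  proof (cases "t0 < m")
    case True
    then have "pt m t0 = t0 + m" by (simp add: pt_def)
    then have "\<bar>z (Inr (g, pt m t0))\<bar> < a" using small[OF gk, of "t0 + m"] True by simp
    moreover have "\<bar>z (Inr (g, t0))\<bar> \<ge> 3 * a" using big[OF gk True] .
    ultimately show ?thesis unfolding c1 c2 by linarith
  next
    case False
    then have "pt m t0 = t0 - m" by (simp add: pt_def)
    then have "\<bar>z (Inr (g, pt m t0))\<bar> \<ge> 3 * a" using big[OF gk, of "t0 - m"] False t0lt by simp
    moreover have "\<bar>z (Inr (g, t0))\<bar> < a" using small[OF gk _ t0lt] False by simp
    ultimately show ?thesis unfolding c1 c2 by linarith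
  qed
qed

lemma core:
  fixes P :: "bool pmf"
  assumes W: "finite W" and a: "a > 0"
    and big: "\<And>g t. g < k \<Longrightarrow> t < m \<Longrightarrow> \<bar>z (Inr (g, t))\<bar> \<ge> 3 * a"
    and small: "\<And>g t. g < k \<Longrightarrow> m \<le> t \<Longrightarrow> t < 2*m \<Longrightarrow> \<bar>z (Inr (g, t))\<bar> < a"
  shows "measure_pmf.prob (Pi_pmf (Dset W k m) False (\<lambda>_. P)) {s. \<bar>val W k m z s\<bar> < a}
         \<le> measure_pmf.expectation (Pi_pmf (Dset W k m) False (\<lambda>_. P)) (\<lambda>s. beta (card (Act k m s)))"
proof -
  define M where "M = Pi_pmf (Dset W k m) False (\<lambda>_. P)"
  define S where "S = Sset W k m"
  define E where "E = {s. \<bar>val W k m z s\<bar> < a}"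
  define K where "K = {..<k}"
  have finS: "finite S" unfolding S_def using finite_S[OF W] .
  have supp: "set_pmf M \<subseteq> S" unfolding M_def S_def by (rule set_pmf_S[OF W])
  have finK: "finite K" unfolding K_def by simp
  have inv: "\<And>B. (\<Sum>s\<in>S. indicator E s * pmf M s) = (\<Sum>s\<in>S. indicator E (tau k m B s) * pmf M s)"
  proof -
    fix B
    show "(\<Sum>s\<in>S. indicator E s * pmf M s) = (\<Sum>s\<in>S. indicator E (tau k m B s) * pmf M s)"
    proof (rule sum.reindex_bij_witness[where i = "tau k m B" and j = "tau k m B", symmetric])
      show "\<And>a. a \<in> S \<Longrightarrow> tau k m B (tau k m B a) = a" by (rule tau_tau)
      show "\<And>a. a \<in> S \<Longrightarrow> tau k m B a \<in> S" unfolding S_def by (rule tau_S)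
      show "\<And>a. a \<in> S \<Longrightarrow> tau k m B (tau k m B a) = a" by (rule tau_tau)
      show "\<And>a. a \<in> S \<Longrightarrow> tau k m B a \<in> S" unfolding S_def by (rule tau_S)
      show "\<And>a. a \<in> S \<Longrightarrow> indicator E (tau k m B a) * pmf M (tau k m B a) = indicator E (tau k m B a) * pmf M a"
        unfolding M_def S_def using pmf_tau[OF W] by simp
    qed
  qed
  have cnt: "(\<Sum>B\<in>Pow K. indicator E (tau k m B s)) \<le> 2 ^ k * beta (card (Act k m s))" if s: "s \<in> S" for s
  proof -
    have "(\<Sum>B\<in>Pow K. indicator E (tau k m B s) :: real) = (\<Sum>B\<in>Pow K. if tau k m B s \<in> E then 1 else 0)"
      by (simp add: indicator_def of_bool_def)
    also have "\<dots> = (\<Sum>B\<in>{B\<in>Pow K. tau k m B s \<in> E}. 1)"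
      by (rule sum.inter_filter[symmetric]) (simp add: finK)
    also have "\<dots> = real (card {B\<in>Pow K. tau k m B s \<in> E})" by simp
    also have "{B\<in>Pow K. tau k m B s \<in> E} =
        {B\<in>Pow K. \<bar>val W k m z s + (\<Sum>g\<in>B \<inter> Act k m s. cg' m z s g - cg m z s g)\<bar> < a}"
      unfolding E_def using val_tau[OF W] by auto
    also have "real (card \<dots>) \<le> beta (card (Act k m s)) * 2 ^ card K"
    proof -
      have "real (card {B\<in>Pow K. \<bar>val W k m z s + (\<Sum>g\<in>B \<inter> Act k m s. cg' m z s g - cg m z s g)\<bar> < a})
            / 2 ^ card K \<le> beta (card (Act k m s))"
        by (rule lo_beta[OF finK _ a]) (auto simp: Act_def K_def intro: gap[where k=k and m=m and z=z, OF a big small])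
      then show ?thesis by (simp add: divide_le_eq)
    qed
    also have "\<dots> = 2 ^ k * beta (card (Act k m s))" unfolding K_def by simp
    finally show ?thesis .
  qed
  have "2 ^ k * measure_pmf.prob M E = (\<Sum>B\<in>Pow K. measure_pmf.prob M E)"
    unfolding K_def by (simp add: card_Pow)
  also have "\<dots> = (\<Sum>B\<in>Pow K. \<Sum>s\<in>S. indicator E (tau k m B s) * pmf M s)"
    unfolding prob_sum[OF finS supp] using inv by simp
  also have "\<dots> = (\<Sum>s\<in>S. (\<Sum>B\<in>Pow K. indicator E (tau k m B s)) * pmf M s)"
    by (subst sum.swap) (simp add: sum_distrib_right)
  also have "\<dots> \<le> (\<Sum>s\<in>S. (2 ^ k * beta (card (Act k m s))) * pmf M s)"
    by (intro sum_mono mult_right_mono cnt) auto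
  also have "\<dots> = 2 ^ k * (\<Sum>s\<in>S. beta (card (Act k m s)) * pmf M s)"
    by (simp add: sum_distrib_left mult.assoc)
  also have "(\<Sum>s\<in>S. beta (card (Act k m s)) * pmf M s) = measure_pmf.expectation M (\<lambda>s. beta (card (Act k m s)))"
    by (rule exp_sum[OF finS supp, symmetric])
  finally have "2 ^ k * measure_pmf.prob M E \<le> 2 ^ k * measure_pmf.expectation M (\<lambda>s. beta (card (Act k m s)))" .
  then show ?thesis unfolding M_def E_def by simp
qed

lemma group_prod:
  fixes phi :: "(nat \<Rightarrow> bool) \<Rightarrow> real" and P :: "bool pmf"
  assumes W: "finite W" and nn: "\<And>r. phi r \<ge> 0"
  shows "measure_pmf.expectation (Pi_pmf (Dset W k m) False (\<lambda>_. P)) (\<lambda>s. \<Prod>g<k. phi (\<lambda>t. s (Inr (g, t))))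
         = (measure_pmf.expectation (Pi_pmf {..<2*m} False (\<lambda>_. P)) phi) ^ k"
proof -
  define M where "M = Pi_pmf (Dset W k m) False (\<lambda>_. P)"
  define R :: "(nat + nat \<times> nat) set" where "R = Inr ` ({..<k} \<times> {..<2*m})"
  define G where "G = (\<lambda>s :: vec. (\<lambda>x. if x \<in> R then s x else False) \<circ> Inr)"
  have RD: "R \<subseteq> Dset W k m" unfolding R_def Dset_def by auto
  have finR: "finite R" unfolding R_def by simp
  have a: "Pi_pmf R False (\<lambda>_. P) = map_pmf (\<lambda>f x. if x \<in> R then f x else False) M"
    unfolding M_def by (rule Pi_pmf_subset[OF finite_D[OF W] RD])
  have b: "Pi_pmf ({..<k} \<times> {..<2*m}) False (\<lambda>_. P) = map_pmf (\<lambda>g. g \<circ> Inr) (Pi_pmf R False (\<lambda>_. P))"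
    by (rule Pi_pmf_bij_betw) (auto simp: R_def bij_betw_def inj_on_def)
  have c: "Pi_pmf ({..<k} \<times> {..<2*m}) False (\<lambda>_. P) = map_pmf G M"
    unfolding b a G_def by (simp add: map_pmf_comp o_def)
  have agree: "(\<Prod>g<k. phi (\<lambda>t. s (Inr (g, t)))) = (\<Prod>g<k. phi (\<lambda>t. G s (g, t)))" if s: "s \<in> set_pmf M" for s
  proof -
    have sS: "s \<in> Sset W k m" using set_pmf_S[OF W] s unfolding M_def by auto
    have "G s (g, t) = s (Inr (g, t))" for g t
      using sS by (auto simp: G_def R_def Sset_def Dset_def)
    then show ?thesis by simp
  qed
  have "measure_pmf.expectation M (\<lambda>s. \<Prod>g<k. phi (\<lambda>t. s (Inr (g, t))))
      = measure_pmf.expectation M (\<lambda>s. \<Prod>g<k. phi (\<lambda>t. G s (g, t)))"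
    by (intro integral_cong_AE) (auto simp: AE_measure_pmf_iff agree)
  also have "\<dots> = measure_pmf.expectation (map_pmf G M) (\<lambda>u. \<Prod>g<k. phi (\<lambda>t. u (g, t)))"
    by simp
  also have "\<dots> = measure_pmf.expectation (Pi_pmf ({..<k} \<times> {..<2*m}) False (\<lambda>_. P)) (\<lambda>u. \<Prod>g\<in>{..<k}. phi (\<lambda>t. u (g, t)))"
    unfolding c ..
  also have "\<dots> = (measure_pmf.expectation (Pi_pmf {..<2*m} False (\<lambda>_. P)) phi) ^ card {..<k}"
    by (rule expectation_rows) (auto intro: nn)
  finally show ?thesis unfolding M_def by simp
qed

lemma exp_ind:
  fixes M :: "'a pmf"
  shows "measure_pmf.expectation M (\<lambda>x. c0 + c * indicator A x) = c0 + c * measure_pmf.prob M A"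
proof -
  have i1: "integrable (measure_pmf M) (\<lambda>x. c0)" by simp
  have i2: "integrable (measure_pmf M) (\<lambda>x. c * indicator A x :: real)"
    by (intro integrable_mult_right measure_pmf.integrable_const_bound[where B=1]) auto
  have "measure_pmf.expectation M (\<lambda>x. c0 + c * indicator A x) =
        measure_pmf.expectation M (\<lambda>x. c0) + measure_pmf.expectation M (\<lambda>x. c * indicator A x)"
    by (rule Bochner_Integration.integral_add[OF i1 i2])
  also have "\<dots> = c0 + c * measure_pmf.prob M A" by simp
  finally show ?thesis .
qed

definition qq :: "nat \<Rightarrow> real \<Rightarrow> real" where
  "qq m p = 2 * real m * p * (1 - p) ^ (2 * m - 1)"

lemma onehot_exp:
  assumes p: "0 \<le> p" "p \<le> 1"
  shows "measure_pmf.expectation (Pi_pmf {..<2*m} False (\<lambda>_. bernoulli_pmf p))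
           (\<lambda>u. if card {t\<in>{..<2*m}. u t} = 1 then c1 else c0) = c0 + (c1 - c0) * qq m p"
proof -
  have bin: "binomial_pmf (2*m) p = map_pmf (\<lambda>f. card {x\<in>{..<2*m}. f x}) (Pi_pmf {..<2*m} False (\<lambda>_. bernoulli_pmf p))"
    using p by (intro binomial_pmf_altdef') auto
  have "measure_pmf.expectation (Pi_pmf {..<2*m} False (\<lambda>_. bernoulli_pmf p))
           (\<lambda>u. if card {t\<in>{..<2*m}. u t} = 1 then c1 else c0)
      = measure_pmf.expectation (binomial_pmf (2*m) p) (\<lambda>j. if j = 1 then c1 else c0)"
    unfolding bin by simp
  also have "\<dots> = measure_pmf.expectation (binomial_pmf (2*m) p) (\<lambda>j. c0 + (c1 - c0) * indicator {1} j)"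
    by (intro Bochner_Integration.integral_cong) (auto simp: indicator_def)
  also have "\<dots> = c0 + (c1 - c0) * measure_pmf.prob (binomial_pmf (2*m) p) {1}" by (rule exp_ind)
  also have "measure_pmf.prob (binomial_pmf (2*m) p) {1} = qq m p"
    using p by (simp add: measure_pmf_single qq_def)
  finally show ?thesis .
qed

lemma beta_le_sqrt: "beta N \<le> 1 / sqrt (real N + 1)"
proof -
  have "beta N = sqrt ((beta N)^2)" using beta_nonneg by simp
  also have "\<dots> \<le> sqrt (1 / (real N + 1))" by (intro real_sqrt_le_mono) (simp add: beta_sq)
  also have "\<dots> = 1 / sqrt (real N + 1)" by (simp add: real_sqrt_divide)
  finally show ?thesis .
qed

lemma beta_split: "beta N \<le> 2 ^ j * (1/2) ^ N + 1 / sqrt (real j + 1)"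
proof (cases "N < j")
  case True
  have "(2::real) ^ j * (1/2) ^ N = 2 ^ (j - N)"
    using True by (simp add: power_diff power_one_over field_simps)
  also have "\<dots> \<ge> 1" by simp
  finally have "2 ^ j * (1/2) ^ N \<ge> (1::real)" .
  moreover have "1 / sqrt (real j + 1) \<ge> 0" by simp
  ultimately show ?thesis using beta_le_1[of N] by linarith
next
  case False
  have "beta N \<le> 1 / sqrt (real N + 1)" by (rule beta_le_sqrt)
  also have "\<dots> \<le> 1 / sqrt (real j + 1)" using False by (intro divide_left_mono) auto
  moreover have "0 \<le> (2::real) ^ j * (1/2) ^ N" by simp
  ultimately show ?thesis by linarith
qed

lemma prod_half_Act: "(\<Prod>g<k. if card {t\<in>{..<2*m}. s (Inr (g, t))} = 1 then 1/2 else 1) = ((1/2) ^ card (Act k m s) :: real)"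
proof -
  have "(\<Prod>g<k. if card {t\<in>{..<2*m}. s (Inr (g, t))} = 1 then 1/2 else (1::real))
      = (\<Prod>g\<in>{..<k} \<inter> {g. oh m s g}. 1/2) * (\<Prod>g\<in>{..<k} \<inter> - {g. oh m s g}. 1)"
    unfolding oh_def by (rule prod.If_cases) simp
  also have "\<dots> = (1/2) ^ card (Act k m s)" by (simp add: Act_def Int_def)
  finally show ?thesis .
qed

lemma exp_beta_bound:
  assumes W: "finite W" and p: "0 \<le> p" "p \<le> 1"
  shows "measure_pmf.expectation (Pi_pmf (Dset W k m) False (\<lambda>_. bernoulli_pmf p)) (\<lambda>s. beta (card (Act k m s)))
         \<le> 2 ^ j * (1 - qq m p / 2) ^ k + 1 / sqrt (real j + 1)"
proof -
  let ?M = "Pi_pmf (Dset W k m) False (\<lambda>_. bernoulli_pmf p)"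
  have fin: "finite (set_pmf ?M)" using finite_S[OF W] set_pmf_S[OF W] by (rule finite_subset[rotated])
  have "measure_pmf.expectation ?M (\<lambda>s. beta (card (Act k m s)))
      \<le> measure_pmf.expectation ?M (\<lambda>s. 2 ^ j * (1/2) ^ card (Act k m s) + 1 / sqrt (real j + 1))"
    by (intro integral_mono integrable_measure_pmf_finite[OF fin] beta_split)
  also have "\<dots> = 2 ^ j * measure_pmf.expectation ?M (\<lambda>s. (1/2) ^ card (Act k m s)) + 1 / sqrt (real j + 1)"
    by (simp add: Bochner_Integration.integral_add integrable_measure_pmf_finite[OF fin])
  also have "measure_pmf.expectation ?M (\<lambda>s. (1/2::real) ^ card (Act k m s))
      = measure_pmf.expectation ?M (\<lambda>s. \<Prod>g<k. (\<lambda>u. if card {t\<in>{..<2*m}. u t} = 1 then 1/2 else (1::real)) (\<lambda>t. s (Inr (g, t))))"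
    by (simp only: prod_half_Act)
  also have "\<dots> = (measure_pmf.expectation (Pi_pmf {..<2*m} False (\<lambda>_. bernoulli_pmf p))
                   (\<lambda>u. if card {t\<in>{..<2*m}. u t} = 1 then 1/2 else 1)) ^ k"
    by (rule group_prod[OF W]) simp
  also have "\<dots> = (1 - qq m p / 2) ^ k" using onehot_exp[OF p, of m "1/2" 1] by simp
  finally show ?thesis .
qed

lemma exp_beta_k1:
  assumes W: "finite W" and p: "0 \<le> p" "p \<le> 1"
  shows "measure_pmf.expectation (Pi_pmf (Dset W 1 m) False (\<lambda>_. bernoulli_pmf p)) (\<lambda>s. beta (card (Act 1 m s)))
         = 1 - qq m p / 2"
proof -
  let ?M = "Pi_pmf (Dset W 1 m) False (\<lambda>_. bernoulli_pmf p)"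
  have b: "beta (card (Act 1 m s)) = (1/2) ^ card (Act 1 m s)" for s
  proof -
    have "Act 1 m s \<subseteq> {0}" by (auto simp: Act_def)
    then have "card (Act 1 m s) \<le> card {0::nat}" by (rule card_mono[rotated]) simp
    then have "card (Act 1 m s) \<le> 1" by simp
    then have "card (Act 1 m s) = 0 \<or> card (Act 1 m s) = 1" by auto
    then show ?thesis using beta_0 beta_1 by auto
  qed
  have "measure_pmf.expectation ?M (\<lambda>s. beta (card (Act 1 m s)))
      = measure_pmf.expectation ?M (\<lambda>s. \<Prod>g<1. (\<lambda>u. if card {t\<in>{..<2*m}. u t} = 1 then 1/2 else 1) (\<lambda>t. s (Inr (g, t))))"
    unfolding b by (simp only: prod_half_Act)
  also have "\<dots> = (measure_pmf.expectation (Pi_pmf {..<2*m} False (\<lambda>_. bernoulli_pmf p))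
                   (\<lambda>u. if card {t\<in>{..<2*m}. u t} = 1 then 1/2 else 1)) ^ 1"
    by (rule group_prod[OF W]) simp
  also have "\<dots> = 1 - qq m p / 2" using onehot_exp[OF p, of m "1/2" 1] by simp
  finally show ?thesis .
qed

definition rowval :: "nat \<Rightarrow> (nat \<Rightarrow> real) \<Rightarrow> (nat \<Rightarrow> bool) \<Rightarrow> real" where
  "rowval n x r = (\<Sum>j<n. (if r j then 1 else 0) * x j)"

lemma row_transfer:
  fixes x :: "nat \<Rightarrow> real" and e :: "nat \<times> nat \<Rightarrow> nat" and P :: "bool pmf"
  assumes inj: "inj_on e ({..<k} \<times> {..<2*m})" and img: "e ` ({..<k} \<times> {..<2*m}) \<subseteq> {..<n}"
    and a: "a > 0"
    and big: "\<And>g t. g < k \<Longrightarrow> t < m \<Longrightarrow> \<bar>x (e (g, t))\<bar> \<ge> 3 * a"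
    and small: "\<And>g t. g < k \<Longrightarrow> m \<le> t \<Longrightarrow> t < 2*m \<Longrightarrow> \<bar>x (e (g, t))\<bar> < a"
  shows "measure_pmf.prob (Pi_pmf {..<n} False (\<lambda>_. P)) {r. \<bar>rowval n x r\<bar> < a}
         \<le> measure_pmf.expectation (Pi_pmf (Dset ({..<n} - e ` ({..<k} \<times> {..<2*m})) k m) False (\<lambda>_. P))
              (\<lambda>s. beta (card (Act k m s)))"
proof -
  define KT where "KT = {..<k} \<times> {..<2*m}"
  define W where "W = {..<n} - e ` KT"
  define h where "h = (\<lambda>j. if j \<in> e ` KT then Inr (the_inv_into KT e j) else (Inl j :: nat + nat \<times> nat))"
  define z where "z = (\<lambda>d. case d of Inl j \<Rightarrow> x j | Inr gt \<Rightarrow> x (e gt))"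
  have injKT: "inj_on e KT" using inj unfolding KT_def .
  have W: "finite W" unfolding W_def by simp
  have hinj: "inj_on h {..<n}"
  proof (rule inj_onI)
    fix i j assume "i \<in> {..<n}" "j \<in> {..<n}" "h i = h j"
    then show "i = j" unfolding h_def
      by (auto split: if_splits dest: arg_cong[where f = e] simp: f_the_inv_into_f[OF injKT])
  qed
  have himg: "h ` {..<n} = Dset W k m"
  proof (intro equalityI subsetI)
    fix d assume "d \<in> h ` {..<n}"
    then obtain j where j: "j < n" "d = h j" by auto
    show "d \<in> Dset W k m"
    proof (cases "j \<in> e ` KT")
      case True
      then have "the_inv_into KT e j \<in> KT" by (rule the_inv_into_into[OF injKT]) simp
      then show ?thesis using True j unfolding h_def Dset_def KT_def by auto
    next
      case False then show ?thesis using j unfolding h_def Dset_def W_def by auto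
    qed
  next
    fix d assume "d \<in> Dset W k m"
    then consider (l) w where "w \<in> W" "d = Inl w" | (r) gt where "gt \<in> KT" "d = Inr gt"
      unfolding Dset_def KT_def by auto
    then show "d \<in> h ` {..<n}"
    proof cases
      case l then show ?thesis unfolding W_def h_def by (auto intro!: image_eqI[of _ _ w])
    next
      case r
      then have "e gt < n" using img unfolding KT_def by auto
      moreover have "h (e gt) = d" using r by (simp add: h_def the_inv_into_f_f[OF injKT])
      ultimately show ?thesis by (auto intro!: image_eqI[of _ _ "e gt"])
    qed
  qed
  have bij: "bij_betw h {..<n} (Dset W k m)" using hinj himg by (rule bij_betw_imageI)
  have out: "h j \<notin> Dset W k m" if "j \<notin> {..<n}" for j
  proof -
    have "j \<notin> e ` KT" using that img unfolding KT_def by auto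
    then show ?thesis using that unfolding h_def Dset_def W_def by auto
  qed
  have Pi: "Pi_pmf {..<n} False (\<lambda>_. P) = map_pmf (\<lambda>s. s \<circ> h) (Pi_pmf (Dset W k m) False (\<lambda>_. P))"
    by (rule Pi_pmf_bij_betw[OF _ bij out]) simp
  have zh: "z (h j) = x j" if "j < n" for j
    unfolding z_def h_def by (auto simp: f_the_inv_into_f[OF injKT])
  have rv: "rowval n x (s \<circ> h) = val W k m z s" for s
  proof -
    have "rowval n x (s \<circ> h) = (\<Sum>j<n. (\<lambda>d. if s d then z d else 0) (h j))"
      unfolding rowval_def by (intro sum.cong) (auto simp: zh)
    also have "\<dots> = (\<Sum>d\<in>Dset W k m. if s d then z d else 0)"
      by (rule sum.reindex_bij_betw[OF bij])
    finally show ?thesis unfolding val_def .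
  qed
  have "measure_pmf.prob (Pi_pmf {..<n} False (\<lambda>_. P)) {r. \<bar>rowval n x r\<bar> < a}
      = measure_pmf.prob (Pi_pmf (Dset W k m) False (\<lambda>_. P)) {s. \<bar>val W k m z s\<bar> < a}"
    unfolding Pi by (simp add: rv vimage_def)
  also have "\<dots> \<le> measure_pmf.expectation (Pi_pmf (Dset W k m) False (\<lambda>_. P)) (\<lambda>s. beta (card (Act k m s)))"
    by (rule core[OF W a]) (auto simp: z_def intro: big small)
  finally show ?thesis unfolding W_def KT_def .
qed

lemma idx_lt: "g < k \<Longrightarrow> t < m \<Longrightarrow> g * m + t < k * (m::nat)"
proof -
  assume "g < k" "t < m"
  then have "g * m + t < g * m + m" by simp
  also have "\<dots> = Suc g * m" by simp
  also have "\<dots> \<le> k * m" using \<open>g < k\<close> by (intro mult_right_mono) auto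
  finally show ?thesis .
qed

lemma idx_inj: "t < m \<Longrightarrow> t' < m \<Longrightarrow> g * m + t = g' * m + (t'::nat) \<Longrightarrow> g = g' \<and> t = t'"
proof -
  assume a: "t < m" "t' < m" "g * m + t = g' * m + t'"
  have "(g * m + t) div m = g" using a(1) by simp
  moreover have "(g' * m + t') div m = g'" using a(2) by simp
  ultimately have "g = g'" using a(3) by simp
  then show ?thesis using a(3) by simp
qed

lemma exists_e:
  fixes Bg Sm :: "nat set"
  assumes Bg: "finite Bg" and Sm: "finite Sm" and disj: "Bg \<inter> Sm = {}"
    and cB: "k * m \<le> card Bg" and cS: "k * m \<le> card Sm" and sB: "Bg \<subseteq> {..<n}" and sS: "Sm \<subseteq> {..<n}"
  shows "\<exists>e. inj_on e ({..<k} \<times> {..<2*m}) \<and> e ` ({..<k} \<times> {..<2*m}) \<subseteq> {..<n} \<and>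
             (\<forall>g t. g < k \<longrightarrow> t < m \<longrightarrow> e (g, t) \<in> Bg) \<and>
             (\<forall>g t. g < k \<longrightarrow> m \<le> t \<longrightarrow> t < 2*m \<longrightarrow> e (g, t) \<in> Sm)"
proof -
  define bl where "bl = sorted_list_of_set Bg"
  define sl where "sl = sorted_list_of_set Sm"
  define e where "e = (\<lambda>(g, t). if t < m then bl ! (g * m + t) else sl ! (g * m + (t - m)))"
  have lb: "length bl = card Bg" and db: "distinct bl" and setb: "set bl = Bg"
    unfolding bl_def using Bg by auto
  have ls: "length sl = card Sm" and ds: "distinct sl" and sets: "set sl = Sm"
    unfolding sl_def using Sm by auto
  have inB: "e (g, t) \<in> Bg" if "g < k" "t < m" for g t
  proof -
    have "g * m + t < length bl" using idx_lt[OF that] cB lb by linarith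
    then show ?thesis using that setb unfolding e_def by auto
  qed
  have inS: "e (g, t) \<in> Sm" if "g < k" "m \<le> t" "t < 2*m" for g t
  proof -
    have "t - m < m" using that by simp
    then have "g * m + (t - m) < length sl" using idx_lt[OF that(1) \<open>t - m < m\<close>] cS ls by linarith
    then show ?thesis using that sets unfolding e_def by auto
  qed
  have inj: "inj_on e ({..<k} \<times> {..<2*m})"
  proof (rule inj_onI)
    fix u v assume u: "u \<in> {..<k} \<times> {..<2*m}" and v: "v \<in> {..<k} \<times> {..<2*m}" and eq: "e u = e v"
    obtain g t where gt: "u = (g, t)" by (cases u)
    obtain g' t' where gt': "v = (g', t')" by (cases v)
    have g: "g < k" "t < 2*m" "g' < k" "t' < 2*m" using u v gt gt' by auto
    show "u = v"
    proof (cases "t < m")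
      case True note t = this
      show ?thesis
      proof (cases "t' < m")
        case True
        have i1: "g * m + t < length bl" using idx_lt[OF g(1) t] cB lb by linarith
        have i2: "g' * m + t' < length bl" using idx_lt[OF g(3) True] cB lb by linarith
        have "bl ! (g * m + t) = bl ! (g' * m + t')" using eq t True unfolding gt gt' e_def by simp
        then have "g * m + t = g' * m + t'" using nth_eq_iff_index_eq[OF db i1 i2] by simp
        then show ?thesis using idx_inj[OF t True] gt gt' by simp
      next
        case False
        have "e u \<in> Bg" using inB[OF g(1) t] gt by simp
        moreover have "e v \<in> Sm" using inS[OF g(3) _ g(4)] False gt' by simp
        ultimately show ?thesis using eq disj by auto
      qed
    next
      case False note t = this
      show ?thesis
      proof (cases "t' < m")
        case True
        have "e u \<in> Sm" using inS[OF g(1) _ g(2)] t gt by simp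
        moreover have "e v \<in> Bg" using inB[OF g(3) True] gt' by simp
        ultimately show ?thesis using eq disj by auto
      next
        case False
        have tm: "t - m < m" "t' - m < m" using g t False by auto
        have i1: "g * m + (t - m) < length sl" using idx_lt[OF g(1) tm(1)] cS ls by linarith
        have i2: "g' * m + (t' - m) < length sl" using idx_lt[OF g(3) tm(2)] cS ls by linarith
        have "sl ! (g * m + (t - m)) = sl ! (g' * m + (t' - m))" using eq t False unfolding gt gt' e_def by simp
        then have "g * m + (t - m) = g' * m + (t' - m)" using nth_eq_iff_index_eq[OF ds i1 i2] by simp
        then have "g = g' \<and> t - m = t' - m" using idx_inj[OF tm] by simp
        then show ?thesis using gt gt' t False by auto
      qed
    qed
  qed
  have img: "e ` ({..<k} \<times> {..<2*m}) \<subseteq> {..<n}"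
  proof
    fix y assume "y \<in> e ` ({..<k} \<times> {..<2*m})"
    then obtain g t where "g < k" "t < 2*m" "y = e (g, t)" by auto
    note h = this
    show "y \<in> {..<n}"
    proof (cases "t < m")
      case True then show ?thesis using h inB[of g t] sB by auto
    next
      case False then show ?thesis using h inS[of g t] sS by auto
    qed
  qed
  show ?thesis using inj img inB inS by blast
qed

lemma rearr_list:
  fixes x :: "nat \<Rightarrow> real" and n :: nat
  defines "L \<equiv> rev (sort (map (\<lambda>i. \<bar>x i\<bar>) [0..<n]))"
  shows "length L = n" and "\<And>i j. i \<le> j \<Longrightarrow> j < n \<Longrightarrow> L ! j \<le> L ! i"
    and "\<And>P. card {i\<in>{..<n}. P \<bar>x i\<bar>} = card {i. i < n \<and> P (L ! i)}"
    and "\<And>k. rearr n x k = L ! (k - 1)"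
proof -
  show len: "length L = n" unfolding L_def by simp
  have sw: "sorted_wrt (\<lambda>a b. b \<le> a) L" unfolding L_def sorted_wrt_rev
    using sorted_sort[of "map (\<lambda>i. \<bar>x i\<bar>) [0..<n]"] by simp
  show "\<And>i j. i \<le> j \<Longrightarrow> j < n \<Longrightarrow> L ! j \<le> L ! i"
  proof -
    fix i j :: nat assume "i \<le> j" "j < n"
    then show "L ! j \<le> L ! i"
    proof (cases "i = j")
      case False
      then have "i < j" using \<open>i \<le> j\<close> by simp
      then show ?thesis using sorted_wrt_nth_less[OF sw _ ] \<open>j < n\<close> len by auto
    qed simp
  qed
  show "\<And>P. card {i\<in>{..<n}. P \<bar>x i\<bar>} = card {i. i < n \<and> P (L ! i)}"
  proof -
    fix P :: "real \<Rightarrow> bool"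
    have "card {i. i < n \<and> P (L ! i)} = length (filter P L)"
      using length_filter_conv_card[of P L] len by simp
    also have "\<dots> = length (filter P (map (\<lambda>i. \<bar>x i\<bar>) [0..<n]))"
      unfolding L_def by (simp add: filter_sort rev_filter[symmetric])
    also have "\<dots> = card {i. i < n \<and> P (map (\<lambda>i. \<bar>x i\<bar>) [0..<n] ! i)}"
      by (simp add: length_filter_conv_card)
    also have "\<dots> = card {i\<in>{..<n}. P \<bar>x i\<bar>}"
      by (intro arg_cong[where f = card]) auto
    finally show "card {i\<in>{..<n}. P \<bar>x i\<bar>} = card {i. i < n \<and> P (L ! i)}" by simp
  qed
  show "\<And>k. rearr n x k = L ! (k - 1)" unfolding rearr_def L_def ..
qed

lemma rearr_big:
  fixes x :: "nat \<Rightarrow> real"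
  assumes "1 \<le> k" "k \<le> n" "rearr n x k \<ge> c"
  shows "card {i\<in>{..<n}. c \<le> \<bar>x i\<bar>} \<ge> k"
proof -
  define L where "L = rev (sort (map (\<lambda>i. \<bar>x i\<bar>) [0..<n]))"
  note R = rearr_list[where x=x and n=n, folded L_def]
  have "{..<k} \<subseteq> {i. i < n \<and> c \<le> L ! i}"
  proof
    fix i assume "i \<in> {..<k}"
    then have "i \<le> k - 1" "k - 1 < n" using assms by auto
    then have "L ! (k - 1) \<le> L ! i" by (rule R(2))
    moreover have "L ! (k - 1) \<ge> c" using assms(3) R(4) by simp
    ultimately show "i \<in> {i. i < n \<and> c \<le> L ! i}" using \<open>i \<le> k - 1\<close> \<open>k - 1 < n\<close> by auto
  qed
  then have "card {..<k} \<le> card {i. i < n \<and> c \<le> L ! i}" by (rule card_mono[rotated]) simp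
  then show ?thesis using R(3)[of "\<lambda>v. c \<le> v"] by simp
qed

lemma rearr_small:
  fixes x :: "nat \<Rightarrow> real"
  assumes "1 \<le> k" "k \<le> n" "rearr n x k < c"
  shows "card {i\<in>{..<n}. \<bar>x i\<bar> < c} \<ge> n - k + 1"
proof -
  define L where "L = rev (sort (map (\<lambda>i. \<bar>x i\<bar>) [0..<n]))"
  note R = rearr_list[where x=x and n=n, folded L_def]
  have "{k - 1..<n} \<subseteq> {i. i < n \<and> L ! i < c}"
  proof
    fix i assume "i \<in> {k - 1..<n}"
    then have "k - 1 \<le> i" "i < n" by auto
    then have "L ! i \<le> L ! (k - 1)" by (rule R(2))
    moreover have "L ! (k - 1) < c" using assms(3) R(4) by simp
    ultimately show "i \<in> {i. i < n \<and> L ! i < c}" using \<open>i < n\<close> by auto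
  qed
  then have "card {k - 1..<n} \<le> card {i. i < n \<and> L ! i < c}" by (rule card_mono[rotated]) simp
  then show ?thesis using R(3)[of "\<lambda>v. v < c"] assms by simp
qed

lemma markov_pmf:
  fixes u :: "'a \<Rightarrow> real"
  assumes fin: "finite (set_pmf M)" and nn: "\<And>x. u x \<ge> 0" and c: "c > 0"
  shows "measure_pmf.prob M {x. u x \<ge> c} \<le> measure_pmf.expectation M u / c"
proof -
  have "measure_pmf.prob M {x\<in>space (measure_pmf M). u x \<ge> c} \<le> measure_pmf.expectation M u / c"
    by (rule integral_Markov_inequality_measure[OF integrable_measure_pmf_finite[OF fin]]) (auto simp: nn c)
  then show ?thesis by simp
qed

lemma fin_matrix: "finite (set_pmf (bernoulli_matrix n p))"
  unfolding bernoulli_matrix_def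
  using finite_bool_funs[of "{..<n} \<times> {..<n}"] set_Pi_bool[of "{..<n} \<times> {..<n}"]
  by (meson finite_SigmaI finite_lessThan finite_subset)

lemma matrix_rows_exp:
  fixes f :: "(nat \<Rightarrow> bool) \<Rightarrow> real"
  assumes nn: "\<And>r. f r \<ge> 0"
  shows "measure_pmf.expectation (bernoulli_matrix n p) (\<lambda>A. \<Prod>i<n. f (\<lambda>j. A (i, j)))
         = (measure_pmf.expectation (Pi_pmf {..<n} False (\<lambda>_. bernoulli_pmf p)) f) ^ n"
proof -
  have fn: "finite {..<n::nat}" by simp
  have "measure_pmf.expectation (Pi_pmf ({..<n} \<times> {..<n}) False (\<lambda>_. bernoulli_pmf p)) (\<lambda>A. \<Prod>i\<in>{..<n}. f (\<lambda>j. A (i, j)))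
         = (measure_pmf.expectation (Pi_pmf {..<n} False (\<lambda>_. bernoulli_pmf p)) f) ^ card {..<n::nat}"
    by (rule expectation_rows[OF fn fn nn])
  then show ?thesis unfolding bernoulli_matrix_def by simp
qed

lemma mat_vec_row: "mat_vec n A x i = rowval n x (\<lambda>j. A (i, j))"
  unfolding mat_vec_def rowval_def ..

lemma prod_if_pow: "(\<Prod>i<(n::nat). if P i then c else (1::real)) = c ^ card {i\<in>{..<n}. P i}"
proof -
  have "(\<Prod>i<n. if P i then c else (1::real)) = (\<Prod>i\<in>{..<n} \<inter> {i. P i}. c) * (\<Prod>i\<in>{..<n} \<inter> - {i. P i}. 1)"
    by (rule prod.If_cases) simp
  also have "\<dots> = c ^ card {i\<in>{..<n}. P i}" by (simp add: Int_def)
  finally show ?thesis .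
qed

lemma matrix_count1:
  fixes x :: "nat \<Rightarrow> real"
  assumes rb: "measure_pmf.prob (Pi_pmf {..<n} False (\<lambda>_. bernoulli_pmf p)) {r. \<bar>rowval n x r\<bar> < a} \<le> pi0"
  shows "measure_pmf.prob (bernoulli_matrix n p) {A. real (card {i\<in>{..<n}. \<not> \<bar>mat_vec n A x i\<bar> < a}) < t}
         \<le> 2 powr t * ((1 + pi0) / 2) ^ n"
proof -
  define f where "f = (\<lambda>r. if \<bar>rowval n x r\<bar> < a then 1 else (1/2::real))"
  define u where "u = (\<lambda>A. \<Prod>i<n. f (\<lambda>j. A (i, j)))"
  have u: "u A = (1/2) ^ card {i\<in>{..<n}. \<not> \<bar>mat_vec n A x i\<bar> < a}" for A
  proof -
    have "u A = (\<Prod>i<n. if \<not> \<bar>mat_vec n A x i\<bar> < a then 1/2 else (1::real))"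
      unfolding u_def f_def mat_vec_row by (intro prod.cong) auto
    then show ?thesis by (simp add: prod_if_pow)
  qed
  have sub: "{A. real (card {i\<in>{..<n}. \<not> \<bar>mat_vec n A x i\<bar> < a}) < t} \<subseteq> {A. u A \<ge> 2 powr (- t)}"
  proof
    fix A assume "A \<in> {A. real (card {i\<in>{..<n}. \<not> \<bar>mat_vec n A x i\<bar> < a}) < t}"
    then have lt: "real (card {i\<in>{..<n}. \<not> \<bar>mat_vec n A x i\<bar> < a}) < t" by simp
    have "u A = 2 powr (- real (card {i\<in>{..<n}. \<not> \<bar>mat_vec n A x i\<bar> < a}))"
      unfolding u by (simp only: powr_minus_divide powr_realpow power_one_over)
    also have "\<dots> \<ge> 2 powr (- t)" using lt by (intro powr_mono) auto
    finally show "A \<in> {A. u A \<ge> 2 powr (- t)}" by simp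
  qed
  have Ef: "measure_pmf.expectation (Pi_pmf {..<n} False (\<lambda>_. bernoulli_pmf p)) f \<le> (1 + pi0) / 2"
  proof -
    have "measure_pmf.expectation (Pi_pmf {..<n} False (\<lambda>_. bernoulli_pmf p)) f
        = measure_pmf.expectation (Pi_pmf {..<n} False (\<lambda>_. bernoulli_pmf p)) (\<lambda>r. 1/2 + 1/2 * indicator {r. \<bar>rowval n x r\<bar> < a} r)"
      unfolding f_def by (intro Bochner_Integration.integral_cong) (auto simp: indicator_def)
    also have "\<dots> = 1/2 + 1/2 * measure_pmf.prob (Pi_pmf {..<n} False (\<lambda>_. bernoulli_pmf p)) {r. \<bar>rowval n x r\<bar> < a}"
      by (rule exp_ind)
    also have "\<dots> \<le> (1 + pi0) / 2" using rb by simp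
    finally show ?thesis .
  qed
  have f0: "f r \<ge> 0" for r unfolding f_def by simp
  have u0: "u A \<ge> 0" for A unfolding u_def by (intro prod_nonneg) (simp add: f0)
  have Ef0: "0 \<le> measure_pmf.expectation (Pi_pmf {..<n} False (\<lambda>_. bernoulli_pmf p)) f"
    by (rule Bochner_Integration.integral_nonneg) (simp add: f0)
  have "measure_pmf.prob (bernoulli_matrix n p) {A. real (card {i\<in>{..<n}. \<not> \<bar>mat_vec n A x i\<bar> < a}) < t}
      \<le> measure_pmf.prob (bernoulli_matrix n p) {A. u A \<ge> 2 powr (- t)}"
    by (rule measure_pmf.finite_measure_mono[OF sub]) simp
  also have "\<dots> \<le> measure_pmf.expectation (bernoulli_matrix n p) u / 2 powr (- t)"
    by (rule markov_pmf[OF fin_matrix u0]) simp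
  also have "measure_pmf.expectation (bernoulli_matrix n p) u
      = (measure_pmf.expectation (Pi_pmf {..<n} False (\<lambda>_. bernoulli_pmf p)) f) ^ n"
    unfolding u_def by (rule matrix_rows_exp[OF f0])
  also have "\<dots> \<le> ((1 + pi0) / 2) ^ n"
    by (rule power_mono[OF Ef Ef0])
  finally have fin: "measure_pmf.prob (bernoulli_matrix n p) {A. real (card {i\<in>{..<n}. \<not> \<bar>mat_vec n A x i\<bar> < a}) < t}
         \<le> ((1 + pi0) / 2) ^ n / 2 powr (- t)" by (simp add: divide_right_mono)
  have "((1 + pi0) / 2) ^ n / 2 powr (- t) = 2 powr t * ((1 + pi0) / 2) ^ n"
    by (simp add: powr_minus_divide)
  then show ?thesis using fin by simp
qed

lemma matrix_count2:
  fixes x :: "nat \<Rightarrow> real"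
  assumes rb: "measure_pmf.prob (Pi_pmf {..<n} False (\<lambda>_. bernoulli_pmf p)) {r. \<bar>rowval n x r\<bar> < a} \<le> pi0"
    and s: "s \<ge> 1"
  shows "measure_pmf.prob (bernoulli_matrix n p) {A. real (card {i\<in>{..<n}. \<bar>mat_vec n A x i\<bar> < a}) \<ge> t}
         \<le> (1 + (s - 1) * pi0) ^ n / s powr t"
proof -
  define f where "f = (\<lambda>r. if \<bar>rowval n x r\<bar> < a then s else (1::real))"
  define u where "u = (\<lambda>A. \<Prod>i<n. f (\<lambda>j. A (i, j)))"
  have u: "u A = s ^ card {i\<in>{..<n}. \<bar>mat_vec n A x i\<bar> < a}" for A
  proof -
    have "u A = (\<Prod>i<n. if \<bar>mat_vec n A x i\<bar> < a then s else (1::real))"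
      unfolding u_def f_def mat_vec_row by (intro prod.cong) auto
    then show ?thesis by (simp add: prod_if_pow)
  qed
  have sub: "{A. real (card {i\<in>{..<n}. \<bar>mat_vec n A x i\<bar> < a}) \<ge> t} \<subseteq> {A. u A \<ge> s powr t}"
  proof
    fix A assume "A \<in> {A. real (card {i\<in>{..<n}. \<bar>mat_vec n A x i\<bar> < a}) \<ge> t}"
    then have lt: "real (card {i\<in>{..<n}. \<bar>mat_vec n A x i\<bar> < a}) \<ge> t" by simp
    have "s powr t \<le> s powr (real (card {i\<in>{..<n}. \<bar>mat_vec n A x i\<bar> < a}))"
      using lt s by (intro powr_mono) auto
    also have "\<dots> = u A" unfolding u using s by (simp add: powr_realpow)
    finally show "A \<in> {A. u A \<ge> s powr t}" by simp
  qed
  have Ef: "measure_pmf.expectation (Pi_pmf {..<n} False (\<lambda>_. bernoulli_pmf p)) f \<le> 1 + (s - 1) * pi0"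
  proof -
    have "measure_pmf.expectation (Pi_pmf {..<n} False (\<lambda>_. bernoulli_pmf p)) f
        = measure_pmf.expectation (Pi_pmf {..<n} False (\<lambda>_. bernoulli_pmf p)) (\<lambda>r. 1 + (s - 1) * indicator {r. \<bar>rowval n x r\<bar> < a} r)"
      unfolding f_def by (intro Bochner_Integration.integral_cong) (auto simp: indicator_def)
    also have "\<dots> = 1 + (s - 1) * measure_pmf.prob (Pi_pmf {..<n} False (\<lambda>_. bernoulli_pmf p)) {r. \<bar>rowval n x r\<bar> < a}"
      by (rule exp_ind)
    also have "\<dots> \<le> 1 + (s - 1) * pi0" using rb s by (intro add_left_mono mult_left_mono) auto
    finally show ?thesis .
  qed
  have f0: "f r \<ge> 0" for r unfolding f_def using s by simp
  have u0: "u A \<ge> 0" for A unfolding u_def by (intro prod_nonneg) (simp add: f0)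
  have Ef0: "0 \<le> measure_pmf.expectation (Pi_pmf {..<n} False (\<lambda>_. bernoulli_pmf p)) f"
    by (rule Bochner_Integration.integral_nonneg) (simp add: f0)
  have sp: "s powr t > 0" using s by simp
  have "measure_pmf.prob (bernoulli_matrix n p) {A. real (card {i\<in>{..<n}. \<bar>mat_vec n A x i\<bar> < a}) \<ge> t}
      \<le> measure_pmf.prob (bernoulli_matrix n p) {A. u A \<ge> s powr t}"
    by (rule measure_pmf.finite_measure_mono[OF sub]) simp
  also have "\<dots> \<le> measure_pmf.expectation (bernoulli_matrix n p) u / s powr t"
    by (rule markov_pmf[OF fin_matrix u0 sp])
  also have "measure_pmf.expectation (bernoulli_matrix n p) u
      = (measure_pmf.expectation (Pi_pmf {..<n} False (\<lambda>_. bernoulli_pmf p)) f) ^ n"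
    unfolding u_def by (rule matrix_rows_exp[OF f0])
  also have "\<dots> \<le> (1 + (s - 1) * pi0) ^ n"
    by (rule power_mono[OF Ef Ef0])
  finally show ?thesis using sp by (simp add: divide_right_mono)
qed

lemma norm_count:
  fixes y :: "nat \<Rightarrow> real"
  assumes a: "a > 0" and lt: "euclid_norm n y < sqrt t * a"
  shows "real (card {i\<in>{..<n}. \<not> \<bar>y i\<bar> < a}) < t"
proof -
  define G where "G = {i\<in>{..<n}. \<not> \<bar>y i\<bar> < a}"
  have "real (card G) * a^2 = (\<Sum>i\<in>G. a^2)" by simp
  also have "\<dots> \<le> (\<Sum>i\<in>G. (y i)^2)"
  proof (rule sum_mono)
    fix i assume "i \<in> G"
    then have "a \<le> \<bar>y i\<bar>" unfolding G_def by auto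
    then have "a^2 \<le> \<bar>y i\<bar>^2" using a by (intro power_mono) auto
    then show "a^2 \<le> (y i)^2" by simp
  qed
  also have "\<dots> \<le> (\<Sum>i<n. (y i)^2)" by (rule sum_mono2) (auto simp: G_def)
  finally have c1: "real (card G) * a^2 \<le> (\<Sum>i<n. (y i)^2)" .
  have "sqrt (\<Sum>i<n. (y i)^2) < sqrt (t * a^2)"
    using lt a unfolding euclid_norm_def by (simp add: real_sqrt_mult)
  then have "(\<Sum>i<n. (y i)^2) < t * a^2" by simp
  with c1 have "real (card G) * a^2 < t * a^2" by linarith
  then show ?thesis unfolding G_def using a by simp
qed

lemma qq_part1:
  assumes q: "0 \<le> q" "q \<le> 1" and t: "t = q * real n / 50"
  shows "2 powr t * (1 - q / 4) ^ n \<le> exp (- (q * real n / 40))"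
proof -
  have "(1 - q/4) ^ n \<le> exp (- q/4) ^ n"
    using q by (intro power_mono) (auto simp: exp_ge_add_one_self[of "-q/4", simplified])
  also have "\<dots> = exp (- q * real n / 4)" by (simp add: exp_of_nat_mult[symmetric] mult.commute)
  finally have a: "(1 - q/4) ^ n \<le> exp (- q * real n / 4)" .
  have "2 powr t = exp (t * ln 2)" by (simp add: powr_def mult.commute)
  also have "\<dots> \<le> exp t"
  proof -
    have t0: "t \<ge> 0" unfolding t using q by simp
    have "t * ln 2 \<le> t" using t0 ln_2_less_1 by (intro mult_left_le) auto
    then show ?thesis by simp
  qed
  finally have b: "2 powr t \<le> exp t" .
  have "2 powr t * (1 - q / 4) ^ n \<le> exp t * exp (- q * real n / 4)"
    using a b q by (intro mult_mono) auto
  also have "\<dots> = exp (t - q * real n / 4)" by (simp add: exp_add[symmetric])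
  also have "\<dots> \<le> exp (- (q * real n / 40))" unfolding t using q by simp
  finally show ?thesis .
qed

lemma arith_pi2:
  fixes L q :: real and k :: nat
  assumes L: "L \<ge> 4096" and q: "0 \<le> q" "q \<le> 1" and Lk: "L = real k * q"
  shows "2 ^ nat \<lfloor>L/4\<rfloor> * (1 - q/2) ^ k + 1 / sqrt (real (nat \<lfloor>L/4\<rfloor>) + 1) \<le> 3 / sqrt L"
proof -
  define j where "j = nat \<lfloor>L/4\<rfloor>"
  have j1: "real j \<le> L/4" unfolding j_def using L by linarith
  have j2: "real j + 1 \<ge> L/4" unfolding j_def using L by linarith
  have sL: "sqrt L > 0" using L by simp
  have "(1 - q/2) ^ k \<le> exp (- q/2) ^ k"
    using q by (intro power_mono) (auto simp: exp_ge_add_one_self[of "-q/2", simplified])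
  also have "\<dots> = exp (- L/2)" unfolding Lk by (simp add: exp_of_nat_mult[symmetric] mult.commute)
  finally have a: "(1 - q/2) ^ k \<le> exp (- L/2)" .
  have "(2::real) ^ j \<le> exp 1 ^ j"
    using exp_ge_add_one_self[of 1] by (intro power_mono) auto
  also have "\<dots> = exp (real j)" by (simp add: exp_of_nat_mult[symmetric])
  also have "\<dots> \<le> exp (L/4)" using j1 by simp
  finally have b: "(2::real) ^ j \<le> exp (L/4)" .
  have "2 ^ j * (1 - q/2) ^ k \<le> exp (L/4) * exp (- L/2)"
    using a b q by (intro mult_mono) auto
  also have "\<dots> = exp (- (L/4))" by (simp add: exp_add[symmetric])
  also have "\<dots> \<le> 1 / sqrt L"
  proof -
    have "sqrt L \<le> L/4"
    proof -
      have "L * 16 \<le> L * L" using L by (intro mult_left_mono) auto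
      then have h: "L \<le> (L/4)^2" by (simp add: power2_eq_square)
      have "sqrt L \<le> sqrt ((L/4)^2)" using h by (rule real_sqrt_le_mono)
      also have "\<dots> = L/4" using L by simp
      finally show ?thesis .
    qed
    also have "\<dots> \<le> exp (L/4)" using exp_ge_add_one_self[of "L/4"] by linarith
    finally have "sqrt L \<le> exp (L/4)" .
    then show ?thesis using sL by (simp add: exp_minus field_simps)
  qed
  finally have c: "2 ^ j * (1 - q/2) ^ k \<le> 1 / sqrt L" .
  have "sqrt (L/4) \<le> sqrt (real j + 1)" using j2 by simp
  then have "sqrt L / 2 \<le> sqrt (real j + 1)" by (simp add: real_sqrt_divide)
  then have d: "1 / sqrt (real j + 1) \<le> 2 / sqrt L" using sL by (simp add: field_simps)
  show ?thesis using c d unfolding j_def[symmetric] by simp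
qed

lemma arith_final:
  fixes L pi :: real
  assumes L: "L \<ge> 4096" and pi: "0 \<le> pi" "pi \<le> 3 / sqrt L"
  shows "(1 + (L powr (1/3) - 1) * pi) ^ n / (L powr (1/3)) powr (3 * real n / 4)
           \<le> 2 * exp (- (ln L * real n / 12))"
proof -
  have L0: "L > 0" using L by simp
  define v where "v = L powr (1/6)"
  have v4: "v \<ge> 4"
  proof -
    have "(4096::real) powr (1/6) = (4 powr 6) powr (1/6)" by simp
    also have "\<dots> = 4" by (simp add: powr_powr)
    finally have "(4096::real) powr (1/6) = 4" .
    moreover have "(4096::real) powr (1/6) \<le> L powr (1/6)" using L by (intro powr_mono2) auto
    ultimately show ?thesis unfolding v_def by simp
  qed
  have s: "L powr (1/3) = v * v" unfolding v_def by (simp add: powr_add[symmetric])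
  have sq: "sqrt L = v * v * v" unfolding v_def using L0 by (simp add: powr_add[symmetric] sqrt_def root_powr_inverse powr_half_sqrt[symmetric])
  have vpos: "v > 0" using v4 by simp
  have "(L powr (1/3) - 1) * pi \<le> L powr (1/3) * pi" using pi by (simp add: mult_right_mono)
  also have "\<dots> \<le> (v * v) * (3 / (v * v * v))" using pi unfolding s sq using vpos by (intro mult_left_mono) auto
  also have "\<dots> = 3 / v" using vpos by (simp add: field_simps)
  finally have b1: "(L powr (1/3) - 1) * pi \<le> 3 / v" .
  have "3 / v \<le> v - 1"
  proof -
    have "3 / v \<le> 3 / 4" using v4 by (intro divide_left_mono) auto
    then show ?thesis using v4 by linarith
  qed
  then have base: "1 + (L powr (1/3) - 1) * pi \<le> v" using b1 by linarith
  have base0: "0 \<le> 1 + (L powr (1/3) - 1) * pi"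
  proof -
    have "L powr (1/3) \<ge> 1" using L by (simp add: ge_one_powr_ge_zero)
    then show ?thesis using pi by simp
  qed
  have num: "(1 + (L powr (1/3) - 1) * pi) ^ n \<le> v ^ n" by (rule power_mono[OF base base0])
  have vn: "v ^ n = L powr (real n / 6)" unfolding v_def using L0 by (simp add: powr_realpow[symmetric] powr_powr)
  have den: "(L powr (1/3)) powr (3 * real n / 4) = L powr (real n / 4)" by (simp add: powr_powr)
  have dpos: "L powr (real n / 4) > 0" using L0 by simp
  have "(1 + (L powr (1/3) - 1) * pi) ^ n / (L powr (1/3)) powr (3 * real n / 4) \<le> L powr (real n / 6) / L powr (real n / 4)"
    unfolding den using num vn dpos by (simp add: divide_right_mono)
  also have "\<dots> = L powr (real n / 6 - real n / 4)" by (rule powr_diff[symmetric])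
  also have "\<dots> = exp (- (ln L * real n / 12))" using L0 by (simp add: powr_def algebra_simps)
  also have "\<dots> \<le> 2 * exp (- (ln L * real n / 12))" by simp
  finally show ?thesis .
qed

lemma qq_bounds:
  assumes "0 \<le> p" "p \<le> 1"
  shows "0 \<le> qq m p" "qq m p \<le> 1"
proof -
  have "pmf (binomial_pmf (2*m) p) 1 = qq m p"
    using assms by (simp add: qq_def)
  then show "0 \<le> qq m p" "qq m p \<le> 1" by (metis pmf_nonneg, metis pmf_le_1)
qed

lemma row_bound:
  fixes x :: "nat \<Rightarrow> real"
  assumes p: "0 \<le> p" "p \<le> 1" and a: "a > 0" and km: "k * m \<le> m1"
    and cB: "m1 \<le> card {i\<in>{..<n}. 3 * a \<le> \<bar>x i\<bar>}" and cS: "m1 \<le> card {i\<in>{..<n}. \<bar>x i\<bar> < a}"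
  shows "\<exists>W. finite W \<and> measure_pmf.prob (Pi_pmf {..<n} False (\<lambda>_. bernoulli_pmf p)) {r. \<bar>rowval n x r\<bar> < a}
         \<le> measure_pmf.expectation (Pi_pmf (Dset W k m) False (\<lambda>_. bernoulli_pmf p)) (\<lambda>s. beta (card (Act k m s)))"
proof -
  define Bg where "Bg = {i\<in>{..<n}. 3 * a \<le> \<bar>x i\<bar>}"
  define Sm where "Sm = {i\<in>{..<n}. \<bar>x i\<bar> < a}"
  have disj: "Bg \<inter> Sm = {}" unfolding Bg_def Sm_def using a by auto
  obtain e where e: "inj_on e ({..<k} \<times> {..<2*m})" "e ` ({..<k} \<times> {..<2*m}) \<subseteq> {..<n}"
      "\<And>g t. g < k \<Longrightarrow> t < m \<Longrightarrow> e (g, t) \<in> Bg"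
      "\<And>g t. g < k \<Longrightarrow> m \<le> t \<Longrightarrow> t < 2*m \<Longrightarrow> e (g, t) \<in> Sm"
    using exists_e[of Bg Sm k m n] disj km cB cS unfolding Bg_def Sm_def by fastforce
  have big: "\<And>g t. g < k \<Longrightarrow> t < m \<Longrightarrow> \<bar>x (e (g, t))\<bar> \<ge> 3 * a" using e(3) unfolding Bg_def by auto
  have small: "\<And>g t. g < k \<Longrightarrow> m \<le> t \<Longrightarrow> t < 2*m \<Longrightarrow> \<bar>x (e (g, t))\<bar> < a" using e(4) unfolding Sm_def by auto
  show ?thesis
    using row_transfer[where x=x and P="bernoulli_pmf p", OF e(1) e(2) a big small] by blast
qed

lemma main_fixed:
  fixes n :: nat and p :: real and m0 m1 :: nat and a :: real and x :: "nat \<Rightarrow> real"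
  assumes H: "0 < p \<and> p < 1 \<and> 0 < m0 \<and> m0 \<le> m1 \<and> 2 * m1 \<le> n \<and> 0 < a \<and>
     rearr n x m1 = 3 * a \<and> rearr n x m1 > 3 * rearr n x (n - m1)"
  shows "(let q = 2 * real m0 * p * (1 - p) ^ (2 * m0 - 1) in
       measure_pmf.prob (bernoulli_matrix n p)
          {A. euclid_norm n (mat_vec n A x) < sqrt (q * real n / 50) * a}
        \<le> exp (- (q * real n / 40))
       \<and>
       (real m1 / real m0 * q > 10000 \<longrightarrow>
         measure_pmf.prob (bernoulli_matrix n p)
            {A. euclid_norm n (mat_vec n A x) < sqrt (real n / 4) * a}
          \<le> 2 * exp (- (ln (real (m1 div m0) * q) * real n / 12))))"
proof -
  from H have p0: "0 < p" and p1: "p < 1" and m0: "0 < m0" and m01: "m0 \<le> m1" and nm: "2 * m1 \<le> n"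
    and a0: "0 < a" and r1: "rearr n x m1 = 3 * a" and r2: "rearr n x m1 > 3 * rearr n x (n - m1)" by auto
  define q where "q = 2 * real m0 * p * (1 - p) ^ (2 * m0 - 1)"
  have qq: "q = qq m0 p" unfolding q_def qq_def ..
  have pb: "0 \<le> p" "p \<le> 1" using p0 p1 by auto
  have q0: "0 \<le> q" and q1: "q \<le> 1" unfolding qq using qq_bounds[OF pb] by auto
  have m1: "1 \<le> m1" using m0 m01 by simp
  have r2': "rearr n x (n - m1) < a" using r1 r2 by simp
  have cB: "m1 \<le> card {i\<in>{..<n}. 3 * a \<le> \<bar>x i\<bar>}"
    using rearr_big[where k=m1 and n=n and x=x and c="3 * a"] m1 nm r1 by simp
  have cS0: "n - (n - m1) + 1 \<le> card {i\<in>{..<n}. \<bar>x i\<bar> < a}"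
    using rearr_small[where k="n - m1" and n=n and x=x and c=a] m1 nm r2' by simp
  have cS: "m1 \<le> card {i\<in>{..<n}. \<bar>x i\<bar> < a}" using cS0 nm by simp
  have part1: "measure_pmf.prob (bernoulli_matrix n p)
          {A. euclid_norm n (mat_vec n A x) < sqrt (q * real n / 50) * a} \<le> exp (- (q * real n / 40))"
  proof -
    obtain W where W: "finite W" and rb0: "measure_pmf.prob (Pi_pmf {..<n} False (\<lambda>_. bernoulli_pmf p)) {r. \<bar>rowval n x r\<bar> < a}
         \<le> measure_pmf.expectation (Pi_pmf (Dset W 1 m0) False (\<lambda>_. bernoulli_pmf p)) (\<lambda>s. beta (card (Act 1 m0 s)))"
      using row_bound[OF pb a0 _ cB cS, of 1 m0] m01 by auto
    have rb: "measure_pmf.prob (Pi_pmf {..<n} False (\<lambda>_. bernoulli_pmf p)) {r. \<bar>rowval n x r\<bar> < a} \<le> 1 - q / 2"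
      using rb0 exp_beta_k1[OF W pb, of m0] unfolding qq by simp
    have sub: "{A. euclid_norm n (mat_vec n A x) < sqrt (q * real n / 50) * a}
        \<subseteq> {A. real (card {i\<in>{..<n}. \<not> \<bar>mat_vec n A x i\<bar> < a}) < q * real n / 50}"
      using norm_count[OF a0] by blast
    have "measure_pmf.prob (bernoulli_matrix n p) {A. euclid_norm n (mat_vec n A x) < sqrt (q * real n / 50) * a}
        \<le> measure_pmf.prob (bernoulli_matrix n p) {A. real (card {i\<in>{..<n}. \<not> \<bar>mat_vec n A x i\<bar> < a}) < q * real n / 50}"
      by (rule measure_pmf.finite_measure_mono[OF sub]) simp
    also have "\<dots> \<le> 2 powr (q * real n / 50) * ((1 + (1 - q / 2)) / 2) ^ n"
      by (rule matrix_count1[OF rb])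
    also have "(1 + (1 - q / 2)) / 2 = 1 - q / 4" by simp
    also have "2 powr (q * real n / 50) * (1 - q / 4) ^ n \<le> exp (- (q * real n / 40))"
      by (rule qq_part1[OF q0 q1 refl])
    finally show ?thesis .
  qed
  have part2: "measure_pmf.prob (bernoulli_matrix n p)
            {A. euclid_norm n (mat_vec n A x) < sqrt (real n / 4) * a}
          \<le> 2 * exp (- (ln (real (m1 div m0) * q) * real n / 12))" if big: "real m1 / real m0 * q > 10000"
  proof -
    define k where "k = m1 div m0"
    define L where "L = real k * q"
    have k1: "k \<ge> 1" unfolding k_def using div_le_mono[OF m01, of m0] m0 by simp
    have e1: "k * m0 + m1 mod m0 = m1" unfolding k_def by (rule div_mult_mod_eq)
    have e2: "m1 mod m0 < m0" using m0 by (rule mod_less_divisor)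
    have "m1 < (k + 1) * m0" using e1 e2 by (simp add: algebra_simps)
    also have "\<dots> \<le> 2 * k * m0" using k1 by (intro mult_right_mono) auto
    finally have h: "m1 < 2 * k * m0" .
    have "real m1 < real (2 * k * m0)" using h by (simp only: of_nat_less_iff)
    then have "real m1 < 2 * real k * real m0" by simp
    then have "real m1 / real m0 < 2 * real k" using m0 by (simp add: divide_less_eq)
    then have "real m1 / real m0 * q \<le> 2 * real k * q" using q0 by (intro mult_right_mono) auto
    then have L4: "L \<ge> 4096" unfolding L_def using big by simp
    obtain W where W: "finite W" and rb0: "measure_pmf.prob (Pi_pmf {..<n} False (\<lambda>_. bernoulli_pmf p)) {r. \<bar>rowval n x r\<bar> < a}
         \<le> measure_pmf.expectation (Pi_pmf (Dset W k m0) False (\<lambda>_. bernoulli_pmf p)) (\<lambda>s. beta (card (Act k m0 s)))"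
      using row_bound[OF pb a0 _ cB cS, of k m0] unfolding k_def by auto
    define pi0 where "pi0 = measure_pmf.prob (Pi_pmf {..<n} False (\<lambda>_. bernoulli_pmf p)) {r. \<bar>rowval n x r\<bar> < a}"
    have pi0b: "pi0 \<le> 3 / sqrt L"
    proof -
      have "pi0 \<le> 2 ^ nat \<lfloor>L/4\<rfloor> * (1 - qq m0 p / 2) ^ k + 1 / sqrt (real (nat \<lfloor>L/4\<rfloor>) + 1)"
        using rb0 exp_beta_bound[OF W pb, where j="nat \<lfloor>L/4\<rfloor>" and k=k and m=m0] unfolding pi0_def by simp
      also have "\<dots> \<le> 3 / sqrt L" unfolding qq[symmetric] by (rule arith_pi2[OF L4 q0 q1 L_def])
      finally show ?thesis .
    qed
    have pi00: "0 \<le> pi0" unfolding pi0_def by simp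
    have s1: "L powr (1/3) \<ge> 1" using L4 by (simp add: ge_one_powr_ge_zero)
    have card_sum: "card {i\<in>{..<n}. \<not> \<bar>mat_vec n A x i\<bar> < a} + card {i\<in>{..<n}. \<bar>mat_vec n A x i\<bar> < a} = n" for A
    proof -
      have "card {i\<in>{..<n}. \<not> \<bar>mat_vec n A x i\<bar> < a} + card {i\<in>{..<n}. \<bar>mat_vec n A x i\<bar> < a}
          = card ({i\<in>{..<n}. \<not> \<bar>mat_vec n A x i\<bar> < a} \<union> {i\<in>{..<n}. \<bar>mat_vec n A x i\<bar> < a})"
        by (rule card_Un_disjoint[symmetric]) auto
      also have "{i\<in>{..<n}. \<not> \<bar>mat_vec n A x i\<bar> < a} \<union> {i\<in>{..<n}. \<bar>mat_vec n A x i\<bar> < a} = {..<n}" by auto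
      finally show ?thesis by simp
    qed
    have sub: "{A. euclid_norm n (mat_vec n A x) < sqrt (real n / 4) * a}
        \<subseteq> {A. real (card {i\<in>{..<n}. \<bar>mat_vec n A x i\<bar> < a}) \<ge> 3 * real n / 4}"
    proof
      fix A assume "A \<in> {A. euclid_norm n (mat_vec n A x) < sqrt (real n / 4) * a}"
      then have "real (card {i\<in>{..<n}. \<not> \<bar>mat_vec n A x i\<bar> < a}) < real n / 4"
        using norm_count[OF a0] by blast
      moreover have "real (card {i\<in>{..<n}. \<not> \<bar>mat_vec n A x i\<bar> < a}) + real (card {i\<in>{..<n}. \<bar>mat_vec n A x i\<bar> < a}) = real n"
        using card_sum[of A] by (metis of_nat_add)
      ultimately show "A \<in> {A. real (card {i\<in>{..<n}. \<bar>mat_vec n A x i\<bar> < a}) \<ge> 3 * real n / 4}" by simp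
    qed
    have "measure_pmf.prob (bernoulli_matrix n p) {A. euclid_norm n (mat_vec n A x) < sqrt (real n / 4) * a}
        \<le> measure_pmf.prob (bernoulli_matrix n p) {A. real (card {i\<in>{..<n}. \<bar>mat_vec n A x i\<bar> < a}) \<ge> 3 * real n / 4}"
      by (rule measure_pmf.finite_measure_mono[OF sub]) simp
    also have "\<dots> \<le> (1 + (L powr (1/3) - 1) * pi0) ^ n / (L powr (1/3)) powr (3 * real n / 4)"
      by (rule matrix_count2[OF _ s1]) (simp add: pi0_def)
    also have "\<dots> \<le> 2 * exp (- (ln L * real n / 12))"
      by (rule arith_final[OF L4 pi00 pi0b])
    finally show ?thesis unfolding L_def k_def .
  qed
  show ?thesis unfolding Let_def q_def[symmetric] using part1 part2 by blast
qed

theorem mainTheorem12: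
  "\<exists>C>0. \<exists>N. \<forall>n\<ge>N. \<forall>(p::real) (m0::nat) (m1::nat) (a::real) (x::nat \<Rightarrow> real).
     0 < p \<and> p < 1 \<and> 0 < m0 \<and> m0 \<le> m1 \<and> 2 * m1 \<le> n \<and> 0 < a \<and>
     rearr n x m1 = 3 * a \<and> rearr n x m1 > 3 * rearr n x (n - m1) \<longrightarrow>
     (let q = 2 * real m0 * p * (1 - p) ^ (2 * m0 - 1) in
       measure_pmf.prob (bernoulli_matrix n p)
          {A. euclid_norm n (mat_vec n A x) < sqrt (q * real n / 50) * a}
        \<le> exp (- (q * real n / 40))
       \<and>
       (real m1 / real m0 * q > C \<longrightarrow>
         measure_pmf.prob (bernoulli_matrix n p)
            {A. euclid_norm n (mat_vec n A x) < sqrt (real n / 4) * a}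
          \<le> 2 * exp (- (ln (real (m1 div m0) * q) * real n / 12))))"
proof -
  show ?thesis
    apply (rule exI[where x="10000::real"])
    apply (rule conjI)
     apply simp
    apply (rule exI[where x="0::nat"])
    apply (intro allI impI)
    apply (rule main_fixed)
    apply assumption
    done
qed

end
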